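(* Let $k,\ell\ge1$, $m=k+\ell+1$ and $\delta\in(0,1)$. Let $S_k$ (hub $h_k$, leaves $a_1,\dots,a_k$) and $S_\ell$ (hub $h_\ell$, leaves $b_1,\dots,b_\ell$) be disjoint stars. Let $T^{hh}$ be obtained by adding the edge $\{h_k,h_\ell\}$ and $T^{ll}$ by adding instead the edge $\{a_1,b_1\}$; in each case $\mathcal H$ is the edge set of the resulting tree and the conference is the whole vertex set $C_1=V(S_k)\cup V(S_\ell)$. Let $b^{\mathrm{hub}}_{\mathrm{eff}}$ be the effective bias in $T^{hh}$ with sender $h_k$, receiver $h_\ell$, witnesses $C_1\setminus\{h_k,h_\ell\}$, and $b^{\mathrm{leaf}}_{\mathrm{eff}}$ the effective bias in $T^{ll}$ with sender $a_1$, receiver $b_1$, witnesses $C_1\setminus\{a_1,b_1\}$. Let $\Delta(\delta):=b^{\mathrm{hub}}_{\mathrm{eff}}-b^{\mathrm{leaf}}_{\mathrm{eff}}$. Then: if $(k,\ell)=(1,1)$, $\Delta\equiv0$; if $(k,\ell)\notin\{(1,1),(2,2)\}$, $\Delta(\delta)>0$ for all $\delta\in(0,1)$; and if $(k,\ell)=(2,2)$, $\Delta$ changes sign at a single point $\delta_c\approx0.9949$ of $(0,1)$, being positive on $(0,\delta_c)$ and negative on $(\delta_c,1)$. Consequently, by the Partition–Threshold rule, except for $(k,\ell)=(2,2)$ with $\delta>\delta_c$, the leaf–leaf protocol yields weakly more equilibrium partitions than the hub–hub protocol.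
   Context: For a finite simple undirected graph $G=(V,E)$ and $\delta\in(0,1)$: $v^G(S):=\sum_{i\in S}\sum_{j\in S,\,j\neq i}\delta^{t_{ij}(G[S])}$ for $S\subseteq V$, where $t_{ij}(G[S])$ is the distance in the induced subgraph ($\infty$ if disconnected, $\delta^\infty:=0$). For a conference structure $\mathcal H$ and $C\subseteq V$, $C/\mathcal H$ is the partition of $C$ into classes connected via chains of pairwise-intersecting members of $\mathcal H$ contained in $C$; $r^{v^G}_{\mathcal H}(C):=\sum_{B\in C/\mathcal H}v^G(B)$; for $X\subseteq V$, $\mathcal H|_X:=\{H\in\mathcal H:H\subseteq X\}$. $\mu_j(X;u)$ denotes the Shapley value of player $j$ in the TU game $u$ on player set $X$. Bargaining-power components: $b^j_i:=\mu_j(V;r^{v^G}_{\mathcal H})-\mu_j(V\setminus\{i\};r^{v^G}_{\mathcal H|_{V\setminus\{i\}}})$. Effective bias with sender $S$, receiver $R$, witness set $W$: $b_{\mathrm{eff}}:=\bigl(b^S_R+\sum_{w\in W}(b^S_w+b^w_R)\bigr)/(|W|+1)$. Partition–Threshold rule: the number of intervals of the Pareto-superior equilibrium is the unique integer $N\ge1$ with $\beta(N)\le b_{\mathrm{eff}}<\beta(N-1)$, where $\beta(N)=\frac1{2N(N+1)}$, $\beta(0)=+\infty$; it is non-increasing in $b_{\mathrm{eff}}$. *)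

theory Defs
  imports Complex_Main
begin

text \<open>A finite simple undirected graph is given by an edge set E of two-element
vertex sets. A walk of length n from i to j inside S (i.e. in the induced subgraph G[S]).\<close>

definition walk_in :: "'a set set \<Rightarrow> 'a set \<Rightarrow> 'a \<Rightarrow> 'a \<Rightarrow> nat \<Rightarrow> bool" where
  "walk_in E S i j n \<longleftrightarrow> (\<exists>p :: 'a list. length p = Suc n \<and> hd p = i \<and> last p = j \<and>
       set p \<subseteq> S \<and> (\<forall>t<n. {p ! t, p ! Suc t} \<in> E))"

text \<open>Distance t_ij(G[S]) (only meaningful when a walk exists).\<close>
definition dist_in :: "'a set set \<Rightarrow> 'a set \<Rightarrow> 'a \<Rightarrow> 'a \<Rightarrow> nat" where
  "dist_in E S i j = (LEAST n. walk_in E S i j n)"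

text \<open>delta ^ t_ij(G[S]) with the convention delta ^ infinity = 0.\<close>
definition dpow :: "real \<Rightarrow> 'a set set \<Rightarrow> 'a set \<Rightarrow> 'a \<Rightarrow> 'a \<Rightarrow> real" where
  "dpow \<delta> E S i j = (if \<exists>n. walk_in E S i j n then \<delta> ^ dist_in E S i j else 0)"

definition vG :: "real \<Rightarrow> 'a set set \<Rightarrow> 'a set \<Rightarrow> real" where
  "vG \<delta> E S = (\<Sum>i\<in>S. \<Sum>j\<in>S - {i}. dpow \<delta> E S i j)"

text \<open>Two points of C are related if some member of H contained in C contains both;
C/H is the partition of C into classes of the reflexive-transitive closure (chains of
pairwise-intersecting members of H contained in C).\<close>
definition comem :: "'a set \<Rightarrow> 'a set set \<Rightarrow> ('a \<times> 'a) set" where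
  "comem C H = {(x, y). \<exists>h\<in>H. h \<subseteq> C \<and> x \<in> h \<and> y \<in> h}"

definition conf_classes :: "'a set \<Rightarrow> 'a set set \<Rightarrow> 'a set set" where
  "conf_classes C H = C // (Id_on C \<union> (comem C H)\<^sup>+)"

definition rgame :: "real \<Rightarrow> 'a set set \<Rightarrow> 'a set set \<Rightarrow> 'a set \<Rightarrow> real" where
  "rgame \<delta> E H C = (\<Sum>B\<in>conf_classes C H. vG \<delta> E B)"

definition restr :: "'a set set \<Rightarrow> 'a set \<Rightarrow> 'a set set" where
  "restr H X = {h \<in> H. h \<subseteq> X}"

definition shapley :: "'a set \<Rightarrow> ('a set \<Rightarrow> real) \<Rightarrow> 'a \<Rightarrow> real" where
  "shapley X u j = (\<Sum>S\<in>Pow (X - {j}).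
      (fact (card S) * fact (card X - card S - 1) / fact (card X)) * (u (insert j S) - u S))"

definition bpow :: "real \<Rightarrow> 'a set set \<Rightarrow> 'a set \<Rightarrow> 'a set set \<Rightarrow> 'a \<Rightarrow> 'a \<Rightarrow> real" where
  "bpow \<delta> E V H j i = shapley V (rgame \<delta> E H) j
       - shapley (V - {i}) (rgame \<delta> E (restr H (V - {i}))) j"

definition beff :: "real \<Rightarrow> 'a set set \<Rightarrow> 'a set \<Rightarrow> 'a set set \<Rightarrow> 'a \<Rightarrow> 'a \<Rightarrow> 'a set \<Rightarrow> real" where
  "beff \<delta> E V H s r W =
     (bpow \<delta> E V H s r + (\<Sum>w\<in>W. bpow \<delta> E V H s w + bpow \<delta> E V H w r)) / (real (card W) + 1)"

definition beta :: "nat \<Rightarrow> real" where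
  "beta N = 1 / (2 * real N * (real N + 1))"

text \<open>N is the number of intervals given by the rule for bias b
  (beta(0) = +infinity, so the upper bound is vacuous for N = 1).\<close>
definition pt_count :: "real \<Rightarrow> nat \<Rightarrow> bool" where
  "pt_count b N \<longleftrightarrow> N \<ge> 1 \<and> beta N \<le> b \<and> (N = 1 \<or> b < beta (N - 1))"

datatype vtx = HK | A nat | HL | B nat

definition starsV :: "nat \<Rightarrow> nat \<Rightarrow> vtx set" where
  "starsV k l = {HK, HL} \<union> A ` {1..k} \<union> B ` {1..l}"

definition starsE :: "nat \<Rightarrow> nat \<Rightarrow> vtx set set" where
  "starsE k l = (\<lambda>i. {HK, A i}) ` {1..k} \<union> (\<lambda>j. {HL, B j}) ` {1..l}"

definition Thh :: "nat \<Rightarrow> nat \<Rightarrow> vtx set set" where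
  "Thh k l = insert {HK, HL} (starsE k l)"

definition Tll :: "nat \<Rightarrow> nat \<Rightarrow> vtx set set" where
  "Tll k l = insert {A 1, B 1} (starsE k l)"

definition b_hub :: "nat \<Rightarrow> nat \<Rightarrow> real \<Rightarrow> real" where
  "b_hub k l \<delta> = beff \<delta> (Thh k l) (starsV k l) (Thh k l) HK HL (starsV k l - {HK, HL})"

definition b_leaf :: "nat \<Rightarrow> nat \<Rightarrow> real \<Rightarrow> real" where
  "b_leaf k l \<delta> = beff \<delta> (Tll k l) (starsV k l) (Tll k l) (A 1) (B 1) (starsV k l - {A 1, B 1})"

definition Delta :: "nat \<Rightarrow> nat \<Rightarrow> real \<Rightarrow> real" where
  "Delta k l \<delta> = b_hub k l \<delta> - b_leaf k l \<delta>"

definition leaf_weakly_more :: "nat \<Rightarrow> nat \<Rightarrow> real \<Rightarrow> bool" where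
  "leaf_weakly_more k l \<delta> \<longleftrightarrow>
     (\<forall>Nh Nl. pt_count (b_hub k l \<delta>) Nh \<and> pt_count (b_leaf k l \<delta>) Nl \<longrightarrow> Nh \<le> Nl)"

end

theory Submission
  imports Defs
begin

lemma walk_0: "walk_in E S x q 0 \<longleftrightarrow> x = q \<and> x \<in> S"
proof
  assume "walk_in E S x q 0"
  then obtain p where "length p = 1" "hd p = x" "last p = q" "set p \<subseteq> S"
    unfolding walk_in_def by auto
  then show "x = q \<and> x \<in> S"
    by (cases p) auto
next
  assume "x = q \<and> x \<in> S"
  then show "walk_in E S x q 0" unfolding walk_in_def
    by (intro exI[of _ "[x]"]) auto
qed

lemma walk_Suc: "walk_in E S x q (Suc n) \<longleftrightarrow> (\<exists>y. x \<in> S \<and> {x, y} \<in> E \<and> walk_in E S y q n)"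
proof
  assume "walk_in E S x q (Suc n)"
  then obtain p where p: "length p = Suc (Suc n)" "hd p = x" "last p = q" "set p \<subseteq> S"
     "\<forall>t<Suc n. {p ! t, p ! Suc t} \<in> E"
    unfolding walk_in_def by auto
  then obtain p' where pp: "p = x # p'" by (cases p) auto
  have "p' \<noteq> []" using p pp by auto
  have "walk_in E S (hd p') q n" unfolding walk_in_def
    apply (intro exI[of _ p'])
    using p pp \<open>p' \<noteq> []\<close> by auto
  moreover have "{x, hd p'} \<in> E" using p(5) pp \<open>p' \<noteq> []\<close>
    by (metis hd_conv_nth nth_Cons_0 nth_Cons_Suc zero_less_Suc)
  ultimately show "\<exists>y. x \<in> S \<and> {x, y} \<in> E \<and> walk_in E S y q n" using p pp by auto
next
  assume "\<exists>y. x \<in> S \<and> {x, y} \<in> E \<and> walk_in E S y q n"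
  then obtain y p where "x \<in> S" "{x,y} \<in> E" and p: "length p = Suc n" "hd p = y" "last p = q"
    "set p \<subseteq> S" "\<forall>t<n. {p ! t, p ! Suc t} \<in> E"
    unfolding walk_in_def by auto
  have "p \<noteq> []" using p by auto
  have "\<forall>t<Suc n. {(x#p) ! t, (x#p) ! Suc t} \<in> E"
  proof (intro allI impI)
    fix t assume "t < Suc n"
    show "{(x#p) ! t, (x#p) ! Suc t} \<in> E"
    proof (cases t)
      case 0 then show ?thesis using \<open>{x,y} \<in> E\<close> p \<open>p \<noteq> []\<close> by (simp add: hd_conv_nth)
    next
      case (Suc t') then show ?thesis using p \<open>t < Suc n\<close> by auto
    qed
  qed
  then show "walk_in E S x q (Suc n)" unfolding walk_in_def
    apply (intro exI[of _ "x#p"])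
    using p \<open>x \<in> S\<close> \<open>p \<noteq> []\<close> by auto
qed

lemma walk_list: "walk_in E S x q n \<Longrightarrow> \<exists>L. length L = Suc n \<and> set L \<subseteq> S \<and> walk_in E (set L) x q n"
  unfolding walk_in_def by (metis order_refl)

lemma walk_mono: "walk_in E S x q n \<Longrightarrow> S \<subseteq> S' \<Longrightarrow> walk_in E S' x q n"
  unfolding walk_in_def by blast

lemma walk_split: "walk_in E S x q n \<Longrightarrow> d \<le> n \<Longrightarrow> \<exists>m. walk_in E S x m d \<and> walk_in E S m q (n - d)"
proof (induction d arbitrary: x n)
  case 0
  then have "x \<in> S" unfolding walk_in_def
    by (metis hd_in_set list.size(3) nat.distinct(1) subsetD)
  then show ?case using 0 by (auto simp: walk_0)
next
  case (Suc d)
  then obtain n' where n: "n = Suc n'" by (cases n) auto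
  with Suc.prems obtain y where "x \<in> S" "{x,y} \<in> E" "walk_in E S y q n'" by (auto simp: walk_Suc)
  with Suc.IH[of y n'] Suc.prems n obtain m where "walk_in E S y m d" "walk_in E S m q (n' - d)" by auto
  then show ?case using \<open>x \<in> S\<close> \<open>{x,y} \<in> E\<close> n by (auto simp: walk_Suc)
qed

lemma walk_ends: "walk_in E S x q n \<Longrightarrow> x \<in> S \<and> q \<in> S"
  unfolding walk_in_def by (metis hd_in_set last_in_set list.size(3) nat.distinct(1) subsetD)

definition cD :: "('a \<Rightarrow> int) \<Rightarrow> ('a \<Rightarrow> nat) \<Rightarrow> 'a \<Rightarrow> 'a \<Rightarrow> nat" where
  "cD pos pe x y = (if x = y then 0 else nat \<bar>pos x - pos y\<bar> + pe x + pe y)"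

locale cat =
  fixes V :: "'a set" and E :: "'a set set" and pos :: "'a \<Rightarrow> int" and pe :: "'a \<Rightarrow> nat"
  assumes finV: "finite V"
    and pe1: "\<And>x. pe x \<le> 1"
    and inj: "\<And>x y. x \<in> V \<Longrightarrow> y \<in> V \<Longrightarrow> pe x = 0 \<Longrightarrow> pe y = 0 \<Longrightarrow> pos x = pos y \<Longrightarrow> x = y"
    and cont: "\<And>x y z. x \<in> V \<Longrightarrow> y \<in> V \<Longrightarrow> pos x \<le> z \<Longrightarrow> z \<le> pos y \<Longrightarrow> \<exists>w\<in>V. pe w = 0 \<and> pos w = z"
    and Eok: "\<And>e. e \<in> E \<Longrightarrow> \<exists>x\<in>V. \<exists>y\<in>V. e = {x,y} \<and> cD pos pe x y = 1"
    and Ein: "\<And>x y. x \<in> V \<Longrightarrow> y \<in> V \<Longrightarrow> cD pos pe x y = 1 \<Longrightarrow> {x,y} \<in> E"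
begin

abbreviation D where "D \<equiv> cD pos pe"

definition Pset where "Pset x y = {v \<in> V. D x v + D v y = D x y}"

lemma D_sym: "D x y = D y x"
  unfolding cD_def by (auto simp: abs_minus_commute)

lemma D_self[simp]: "D x x = 0"
  unfolding cD_def by auto

lemma D_eq0: "x \<in> V \<Longrightarrow> y \<in> V \<Longrightarrow> D x y = 0 \<Longrightarrow> x = y"
  unfolding cD_def using inj[of x y] by (auto split: if_splits)

lemma tri: "D x z \<le> D x y + D y z"
  unfolding cD_def by (auto split: if_splits)

lemma edge_D: "{x, y} \<in> E \<Longrightarrow> x \<in> V \<and> y \<in> V \<and> D x y = 1"
proof -
  assume "{x,y} \<in> E"
  then obtain a b where ab: "a \<in> V" "b \<in> V" "{x,y} = {a,b}" "D a b = 1" using Eok by blast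
  then show ?thesis by (auto simp: doubleton_eq_iff D_sym)
qed

lemma Dint: "u \<noteq> w \<Longrightarrow> int (D u w) = \<bar>pos u - pos w\<bar> + int (pe u) + int (pe w)"
  unfolding cD_def by simp

lemma key:
  assumes "x \<in> V" "y \<in> V" "v \<in> V" "q \<in> V" "D x y = 1" "v \<noteq> x" "D x v + D v q = D x q"
  shows "D y v + D v q = D y q"
proof (cases "v = q")
  case True then show ?thesis by simp
next
  case vq: False
  have xq: "x \<noteq> q"
  proof
    assume "x = q"
    then have "D x v = 0" using assms(7) by simp
    then show False using D_eq0 assms by metis
  qed
  have xy: "x \<noteq> y" using assms by auto
  have h: "\<bar>pos x - pos v\<bar> + int (pe x) + int (pe v) + (\<bar>pos v - pos q\<bar> + int (pe v) + int (pe q))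
      = \<bar>pos x - pos q\<bar> + int (pe x) + int (pe q)"
    using arg_cong[OF assms(7), of int] Dint[of x v] Dint[of v q] Dint[of x q] vq xq assms(6) by simp
  have h1: "\<bar>pos x - pos y\<bar> + int (pe x) + int (pe y) = 1"
    using arg_cong[OF assms(5), of int] Dint[of x y] xy by simp
  have ev: "pe v = 0" and btw: "\<bar>pos x - pos v\<bar> + \<bar>pos v - pos q\<bar> = \<bar>pos x - pos q\<bar>"
    using h by (auto simp: abs_if split: if_splits)
  have nx: "pe x = 1 \<or> pos v \<noteq> pos x"
    using inj[of x v] assms pe1[of x] ev by fastforce
  show ?thesis
  proof (cases "y = v")
    case True then show ?thesis by simp
  next
    case yv: False
    show ?thesis
    proof (cases "y = q")
      case True
      have nq: "pe q = 1 \<or> pos v \<noteq> pos q"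
        using inj[of q v] assms pe1[of q] ev vq by fastforce
      have h1': "\<bar>pos x - pos q\<bar> + int (pe x) + int (pe q) = 1" using h1 True by simp
      have False using h1' btw nx nq pe1[of x] pe1[of q] ev by arith
      then show ?thesis ..
    next
      case yq: False
      have "\<bar>pos y - pos v\<bar> + \<bar>pos v - pos q\<bar> = \<bar>pos y - pos q\<bar>"
        using h1 btw nx pe1[of x] pe1[of y] by arith
      then have "int (D y v + D v q) = int (D y q)"
        using Dint[of y v] Dint[of v q] Dint[of y q] yv yq vq ev by simp
      then show ?thesis by simp
    qed
  qed
qed

lemma Pset_self: "x \<in> V \<Longrightarrow> Pset x x = {x}"
  unfolding Pset_def using D_eq0 by auto

lemma Pset_ends: "x \<in> V \<Longrightarrow> q \<in> V \<Longrightarrow> x \<in> Pset x q \<and> q \<in> Pset x q"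
  unfolding Pset_def by simp

lemma walk_lower: "S \<subseteq> V \<Longrightarrow> walk_in E S x q n \<Longrightarrow> D x q \<le> n \<and> Pset x q \<subseteq> S"
proof (induction n arbitrary: x)
  case 0
  then show ?case using Pset_self by (auto simp: walk_0)
next
  case (Suc n)
  then obtain y where y: "x \<in> S" "{x,y} \<in> E" "walk_in E S y q n" by (auto simp: walk_Suc)
  have IH: "D y q \<le> n" "Pset y q \<subseteq> S" using Suc.IH[OF Suc.prems(1) y(3)] by auto
  have e: "x \<in> V" "y \<in> V" "D x y = 1" using edge_D[OF y(2)] by auto
  have qS: "q \<in> S" using walk_ends[OF y(3)] by auto
  have "D x q \<le> D x y + D y q" by (rule tri)
  then have "D x q \<le> Suc n" using IH e by simp
  moreover have "Pset x q \<subseteq> S"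
  proof
    fix v assume v: "v \<in> Pset x q"
    show "v \<in> S"
    proof (cases "v = x")
      case True then show ?thesis using y by simp
    next
      case False
      have "v \<in> Pset y q" using key[of x y v q] v e False qS Suc.prems(1) unfolding Pset_def by auto
      then show ?thesis using IH by auto
    qed
  qed
  ultimately show ?case by simp
qed

lemma next_step:
  assumes "x \<in> V" "q \<in> V" "x \<noteq> q"
  shows "\<exists>y\<in>V. D x y = 1 \<and> D y q + 1 = D x q"
proof (cases "pe x = 1")
  case True
  obtain w where w: "w \<in> V" "pe w = 0" "pos w = pos x" using cont[of x x "pos x"] assms by auto
  have wx: "w \<noteq> x" using w True by auto
  have "D x w = 1" using Dint[of x w] wx w True by simp
  moreover have "D w q + 1 = D x q"
  proof (cases "q = w")
    case True then show ?thesis using \<open>D x w = 1\<close> by simp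
  next
    case False
    then have "int (D w q + 1) = int (D x q)" using Dint[of w q] Dint[of x q] assms w \<open>pe x = 1\<close> by simp
    then show ?thesis by linarith
  qed
  ultimately show ?thesis using w by blast
next
  case False
  then have px: "pe x = 0" using pe1[of x] by simp
  consider "pos q = pos x" | "pos q > pos x" | "pos q < pos x" by linarith
  then show ?thesis
  proof cases
    case 1
    then have "pe q \<noteq> 0" using inj[of x q] assms px by auto
    then have "pe q = 1" using pe1[of q] by simp
    then have "D x q = 1" using Dint[of x q] assms px 1 by simp
    then show ?thesis using assms by auto
  next
    case 2
    obtain w where w: "w \<in> V" "pe w = 0" "pos w = pos x + 1" using cont[of x q "pos x + 1"] assms 2 by auto
    have wx: "w \<noteq> x" using w by auto
    have "D x w = 1" using Dint[of x w] wx w px by simp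
    moreover have "D w q + 1 = D x q"
    proof (cases "q = w")
      case True then show ?thesis using \<open>D x w = 1\<close> by simp
    next
      case False
      then have "int (D w q + 1) = int (D x q)" using Dint[of w q] Dint[of x q] assms w px 2 by simp
      then show ?thesis by linarith
    qed
    ultimately show ?thesis using w by blast
  next
    case 3
    obtain w where w: "w \<in> V" "pe w = 0" "pos w = pos x - 1" using cont[of q x "pos x - 1"] assms 3 by auto
    have wx: "w \<noteq> x" using w by auto
    have "D x w = 1" using Dint[of x w] wx w px by simp
    moreover have "D w q + 1 = D x q"
    proof (cases "q = w")
      case True then show ?thesis using \<open>D x w = 1\<close> by simp
    next
      case False
      then have "int (D w q + 1) = int (D x q)" using Dint[of w q] Dint[of x q] assms w px 3 by simp
      then show ?thesis by linarith
    qed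
    ultimately show ?thesis using w by blast
  qed
qed

lemma walk_upper_aux: "\<forall>x. D x q = d \<longrightarrow> x \<in> V \<longrightarrow> q \<in> V \<longrightarrow> Pset x q \<subseteq> S \<longrightarrow> walk_in E S x q d"
proof (induction d)
  case 0
  show ?case
  proof (intro allI impI)
    fix x assume a: "D x q = 0" "x \<in> V" "q \<in> V" "Pset x q \<subseteq> S"
    then have "x = q" using D_eq0 by auto
    then show "walk_in E S x q 0" using a Pset_ends[of x q] by (auto simp: walk_0)
  qed
next
  case (Suc d)
  show ?case
  proof (intro allI impI)
    fix x assume a: "D x q = Suc d" "x \<in> V" "q \<in> V" "Pset x q \<subseteq> S"
    then have "x \<noteq> q" by auto
    then obtain y where y: "y \<in> V" "D x y = 1" "D y q + 1 = D x q" using next_step a by blast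
    have "Pset y q \<subseteq> Pset x q"
    proof
      fix v assume "v \<in> Pset y q"
      then have v: "v \<in> V" "D y v + D v q = D y q" unfolding Pset_def by auto
      have "D x v \<le> D x y + D y v" by (rule tri)
      moreover have "D x q \<le> D x v + D v q" by (rule tri)
      ultimately show "v \<in> Pset x q" unfolding Pset_def using v y by auto
    qed
    then have "walk_in E S y q d" using Suc.IH y a by auto
    moreover have "{x,y} \<in> E" using Ein y a by auto
    moreover have "x \<in> S" using a Pset_ends[of x q] by auto
    ultimately show "walk_in E S x q (Suc d)" by (auto simp: walk_Suc)
  qed
qed

lemma walk_upper: "x \<in> V \<Longrightarrow> q \<in> V \<Longrightarrow> Pset x q \<subseteq> S \<Longrightarrow> walk_in E S x q (D x q)"
  using walk_upper_aux[of q "D x q" S] by simp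

lemma reach: "S \<subseteq> V \<Longrightarrow> x \<in> V \<Longrightarrow> q \<in> V \<Longrightarrow> (\<exists>n. walk_in E S x q n) \<longleftrightarrow> Pset x q \<subseteq> S"
  using walk_lower[of S x q] walk_upper[of x q S] by blast

lemma dist_eq: "S \<subseteq> V \<Longrightarrow> x \<in> V \<Longrightarrow> q \<in> V \<Longrightarrow> Pset x q \<subseteq> S \<Longrightarrow> dist_in E S x q = D x q"
  unfolding dist_in_def
proof (rule Least_equality)
  assume "S \<subseteq> V" "x \<in> V" "q \<in> V" "Pset x q \<subseteq> S"
  then show "walk_in E S x q (D x q)" using walk_upper by simp
next
  fix n assume "S \<subseteq> V" "walk_in E S x q n"
  then show "D x q \<le> n" using walk_lower by simp
qed

lemma dpow_eq: "S \<subseteq> V \<Longrightarrow> x \<in> V \<Longrightarrow> q \<in> V \<Longrightarrow>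
    dpow \<delta> E S x q = (if Pset x q \<subseteq> S then \<delta> ^ D x q else 0)"
  unfolding dpow_def using reach[of S x q] dist_eq[of S x q] by simp

lemma card_Pset: assumes "x \<in> V" "q \<in> V" shows "card (Pset x q) = D x q + 1"
proof (rule antisym)
  have "Pset x q \<subseteq> V" unfolding Pset_def by auto
  have fin: "finite (Pset x q)" using finV unfolding Pset_def by simp
  have w: "walk_in E (Pset x q) x q (D x q)" using walk_upper[OF assms order_refl] .
  then obtain L where L: "length L = Suc (D x q)" "set L \<subseteq> Pset x q" "walk_in E (set L) x q (D x q)"
    using walk_list[OF w] by blast
  have "set L \<subseteq> V" using L(2) \<open>Pset x q \<subseteq> V\<close> by (rule order_trans)
  then have "Pset x q \<subseteq> set L" using walk_lower[OF _ L(3)] by simp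
  then have "card (Pset x q) \<le> card (set L)" by (rule card_mono[rotated]) simp
  also have "\<dots> \<le> length L" by (rule card_length)
  finally show "card (Pset x q) \<le> D x q + 1" using L by simp
  have "{0..D x q} \<subseteq> D x ` Pset x q"
  proof
    fix d assume "d \<in> {0..D x q}"
    then have "d \<le> D x q" by simp
    then obtain m where m: "walk_in E (Pset x q) x m d" "walk_in E (Pset x q) m q (D x q - d)"
      using walk_split[OF w] by blast
    have mP: "m \<in> Pset x q" using walk_ends[OF m(2)] by auto
    have "D x m \<le> d" using walk_lower[OF \<open>Pset x q \<subseteq> V\<close> m(1)] by simp
    moreover have "D m q \<le> D x q - d" using walk_lower[OF \<open>Pset x q \<subseteq> V\<close> m(2)] by simp
    moreover have "D x q \<le> D x m + D m q" by (rule tri)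
    ultimately have "D x m = d" using \<open>d \<le> D x q\<close> by linarith
    then show "d \<in> D x ` Pset x q" using mP by (metis imageI)
  qed
  then have "card {0..D x q} \<le> card (D x ` Pset x q)"
    by (rule card_mono[rotated]) (use fin in simp)
  also have "\<dots> \<le> card (Pset x q)" by (rule card_image_le) (rule fin)
  finally show "D x q + 1 \<le> card (Pset x q)" by simp
qed

end

lemma sum_Pow_card:
  assumes "finite Y"
  shows "(\<Sum>T\<in>Pow Y. g (card T)) = (\<Sum>t\<le>card Y. of_nat (card Y choose t) * (g t :: real))"
proof -
  have "(\<Sum>T\<in>Pow Y. g (card T)) = (\<Sum>t\<in>{..card Y}. \<Sum>T\<in>{T \<in> Pow Y. card T = t}. g (card T))"
    by (rule sum.group[symmetric]) (use assms in \<open>auto intro: card_mono\<close>)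
  also have "\<dots> = (\<Sum>t\<le>card Y. of_nat (card Y choose t) * g t)"
  proof (rule sum.cong[OF refl])
    fix t assume "t \<in> {..card Y}"
    have "(\<Sum>T\<in>{T \<in> Pow Y. card T = t}. g (card T)) = (\<Sum>T\<in>{T \<in> Pow Y. card T = t}. g t)"
      by (rule sum.cong) auto
    also have "\<dots> = of_nat (card {T \<in> Pow Y. card T = t}) * g t" by simp
    also have "card {T \<in> Pow Y. card T = t} = card Y choose t"
      using n_subsets[OF assms, of t] by (simp add: Pow_def)
    finally show "(\<Sum>T\<in>{T \<in> Pow Y. card T = t}. g (card T)) = of_nat (card Y choose t) * g t" .
  qed
  finally show ?thesis .
qed

lemma beta_ident:
  "(\<Sum>t\<le>m. of_nat (m choose t) * (fact (t + r) * fact (m + Suc r - (t + r) - 1) / fact (m + Suc r)))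
     = (1::real) / real (Suc r)"
proof -
  have "(\<Sum>t\<le>m. of_nat (m choose t) * (fact (t + r) * fact (m + Suc r - (t + r) - 1) / fact (m + Suc r)))
      = (\<Sum>t\<le>m. (fact m * fact r / fact (m + Suc r)) * of_nat ((r + t) choose t) :: real)"
  proof (rule sum.cong[OF refl])
    fix t assume "t \<in> {..m}"
    then have tm: "t \<le> m" by simp
    have e1: "m + Suc r - (t + r) - 1 = m - t" by simp
    have c1: "(of_nat (m choose t) :: real) = fact m / (fact t * fact (m - t))"
      using binomial_fact[OF tm] by simp
    have c2: "(of_nat ((r + t) choose t) :: real) = fact (r + t) / (fact t * fact r)"
      using binomial_fact[of t "r + t"] by simp
    show "of_nat (m choose t) * (fact (t + r) * fact (m + Suc r - (t + r) - 1) / fact (m + Suc r))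
      = (fact m * fact r / fact (m + Suc r)) * (of_nat ((r + t) choose t) :: real)"
      unfolding e1 c1 c2 by (simp add: field_simps add.commute)
  qed
  also have "\<dots> = (fact m * fact r / fact (m + Suc r)) * of_nat (\<Sum>t\<le>m. (r + t) choose t)"
    by (simp add: sum_distrib_left)
  also have "(\<Sum>t\<le>m. (r + t) choose t) = Suc (r + m) choose m" by (rule sum_choose_lower)
  also have "(of_nat (Suc (r + m) choose m) :: real) = fact (m + Suc r) / (fact m * fact (Suc r))"
    using binomial_fact[of m "Suc (r + m)"] by (simp add: add.commute)
  also have "(fact m * fact r / fact (m + Suc r)) * (fact (m + Suc r) / (fact m * fact (Suc r))) = (fact r / fact (Suc r) :: real)"
    by simp
  also have "(fact r / fact (Suc r) :: real) = 1 / real (Suc r)"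
    by (simp add: fact_Suc del: of_nat_Suc)
  finally show ?thesis .
qed

lemma shapley_unan_main:
  assumes "finite X" "j \<in> P" "P \<subseteq> X"
  shows "shapley X (\<lambda>S. if P \<subseteq> S then 1 else 0) j = 1 / real (card P)"
proof -
  define w :: "nat \<Rightarrow> real" where "w s = fact s * fact (card X - s - 1) / fact (card X)" for s
  define Q where "Q = P - {j}"
  have finP: "finite P" using assms finite_subset by blast
  have cP: "card P = Suc (card Q)" unfolding Q_def using assms finP
    by (metis card_Suc_Diff1)
  have "shapley X (\<lambda>S. if P \<subseteq> S then 1 else 0) j = (\<Sum>S\<in>Pow (X - {j}). if Q \<subseteq> S then w (card S) else 0)"
    unfolding shapley_def w_def Q_def
    by (rule sum.cong[OF refl]) (use assms in auto)
  also have "\<dots> = (\<Sum>S\<in>{S \<in> Pow (X - {j}). Q \<subseteq> S}. w (card S))"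
    by (rule sum.inter_filter[symmetric]) (use assms in simp)
  also have "{S \<in> Pow (X - {j}). Q \<subseteq> S} = (\<lambda>T. T \<union> Q) ` Pow (X - P)"
  proof (rule set_eqI, rule iffI)
    fix S assume "S \<in> {S \<in> Pow (X - {j}). Q \<subseteq> S}"
    then have S: "S \<subseteq> X - {j}" "Q \<subseteq> S" by auto
    then have "S = (S - P) \<union> Q" "S - P \<in> Pow (X - P)" unfolding Q_def by auto
    then show "S \<in> (\<lambda>T. T \<union> Q) ` Pow (X - P)" by blast
  next
    fix S assume "S \<in> (\<lambda>T. T \<union> Q) ` Pow (X - P)"
    then show "S \<in> {S \<in> Pow (X - {j}). Q \<subseteq> S}" unfolding Q_def using assms by auto
  qed
  also have "(\<Sum>S\<in>(\<lambda>T. T \<union> Q) ` Pow (X - P). w (card S)) = (\<Sum>T\<in>Pow (X - P). w (card (T \<union> Q)))"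
  proof (rule sum.reindex_cong[OF _ refl refl])
    show "inj_on (\<lambda>T. T \<union> Q) (Pow (X - P))"
    proof (rule inj_onI)
      fix T1 T2 assume "T1 \<in> Pow (X - P)" "T2 \<in> Pow (X - P)" "T1 \<union> Q = T2 \<union> Q"
      then show "T1 = T2" unfolding Q_def by blast
    qed
  qed
  also have "\<dots> = (\<Sum>T\<in>Pow (X - P). w (card T + card Q))"
  proof (rule sum.cong[OF refl])
    fix T assume "T \<in> Pow (X - P)"
    then have T: "T \<subseteq> X" "T \<inter> Q = {}" unfolding Q_def by auto
    then have "finite T" "finite Q" using assms finP finite_subset[of T X] unfolding Q_def by auto
    note T = T this
    then show "w (card (T \<union> Q)) = w (card T + card Q)" using T by (simp add: card_Un_disjoint)
  qed
  also have "\<dots> = (\<Sum>t\<le>card (X - P). of_nat (card (X - P) choose t) * w (t + card Q))"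
    by (rule sum_Pow_card) (use assms in simp)
  also have "card X = card (X - P) + Suc (card Q)"
    using assms finP cP by (metis card_Diff_subset card_mono le_add_diff_inverse2)
  then have "(\<Sum>t\<le>card (X - P). of_nat (card (X - P) choose t) * w (t + card Q))
      = 1 / real (Suc (card Q))"
    unfolding w_def using beta_ident[of "card (X - P)" "card Q"] by simp
  finally show ?thesis using cP by simp
qed

lemma shapley_unan:
  assumes "finite X" "j \<in> X"
  shows "shapley X (\<lambda>S. if P \<subseteq> S then 1 else 0) j = (if P \<subseteq> X \<and> j \<in> P then 1 / real (card P) else 0)"
proof (cases "P \<subseteq> X \<and> j \<in> P")
  case True then show ?thesis using shapley_unan_main[OF assms(1)] by simp
next
  case False
  have "shapley X (\<lambda>S. if P \<subseteq> S then 1 else 0) j = (\<Sum>S\<in>Pow (X - {j}). 0)"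
    unfolding shapley_def
  proof (rule sum.cong[OF refl])
    fix S assume S: "S \<in> Pow (X - {j})"
    have "(if P \<subseteq> insert j S then 1 else 0) - (if P \<subseteq> S then 1 else 0) = (0::real)"
      using False S assms by auto
    then show "fact (card S) * fact (card X - card S - 1) / fact (card X) *
          ((if P \<subseteq> insert j S then 1 else 0) - (if P \<subseteq> S then 1 else 0)) = (0::real)" by simp
  qed
  moreover have "(\<Sum>S\<in>Pow (X - {j}). 0) = (0::real)" by simp
  ultimately show ?thesis using False by (simp only: if_False)
qed

lemma shapley_cong: "(\<And>S. S \<subseteq> X \<Longrightarrow> u S = u' S) \<Longrightarrow> j \<in> X \<Longrightarrow> shapley X u j = shapley X u' j"
  unfolding shapley_def
proof (rule sum.cong[OF refl])
  fix S assume a: "\<And>S. S \<subseteq> X \<Longrightarrow> u S = u' S" "j \<in> X" and S: "S \<in> Pow (X - {j})"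
  then have "S \<subseteq> X" "insert j S \<subseteq> X" by auto
  then have "u S = u' S" "u (insert j S) = u' (insert j S)" using a(1) by blast+
  then show "fact (card S) * fact (card X - card S - 1) / fact (card X) * (u (insert j S) - u S) =
         fact (card S) * fact (card X - card S - 1) / fact (card X) * (u' (insert j S) - u' S)" by simp
qed

lemma shapley_lin:
  "shapley X (\<lambda>S. \<Sum>t\<in>T. c t * g t S) j = (\<Sum>t\<in>T. c t * shapley X (g t) j)"
proof -
  have "shapley X (\<lambda>S. \<Sum>t\<in>T. c t * g t S) j =
     (\<Sum>S\<in>Pow (X - {j}). \<Sum>t\<in>T. c t * (fact (card S) * fact (card X - card S - 1) / fact (card X) *
        (g t (insert j S) - g t S)))"
    unfolding shapley_def
  proof (rule sum.cong[OF refl])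
    fix S assume "S \<in> Pow (X - {j})"
    define w :: real where "w = fact (card S) * fact (card X - card S - 1) / fact (card X)"
    have "(\<Sum>t\<in>T. c t * g t (insert j S)) - (\<Sum>t\<in>T. c t * g t S) = (\<Sum>t\<in>T. c t * (g t (insert j S) - g t S))"
      by (simp add: sum_subtractf right_diff_distrib)
    then have "w * ((\<Sum>t\<in>T. c t * g t (insert j S)) - (\<Sum>t\<in>T. c t * g t S)) = (\<Sum>t\<in>T. c t * (w * (g t (insert j S) - g t S)))"
      by (simp add: sum_distrib_left mult.left_commute)
    then show "fact (card S) * fact (card X - card S - 1) / fact (card X) *
        ((\<Sum>t\<in>T. c t * g t (insert j S)) - (\<Sum>t\<in>T. c t * g t S)) =
      (\<Sum>t\<in>T. c t * (fact (card S) * fact (card X - card S - 1) / fact (card X) * (g t (insert j S) - g t S)))"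
      unfolding w_def .
  qed
  also have "\<dots> = (\<Sum>t\<in>T. c t * shapley X (g t) j)"
    unfolding shapley_def by (subst sum.swap) (simp add: sum_distrib_left)
  finally show ?thesis .
qed

lemma walk_in_R:
  assumes "\<And>h. h \<in> E \<Longrightarrow> h \<subseteq> C \<Longrightarrow> h \<in> H"
  shows "walk_in E C i j n \<Longrightarrow> (i, j) \<in> Id_on C \<union> (comem C H)\<^sup>+"
proof (induction n arbitrary: i)
  case 0 then show ?case by (auto simp: walk_0)
next
  case (Suc n)
  then obtain y where y: "i \<in> C" "{i,y} \<in> E" "walk_in E C y j n" by (auto simp: walk_Suc)
  have yC: "y \<in> C" using walk_ends[OF y(3)] by simp
  have "{i,y} \<in> H" by (rule assms) (use y yC in simp_all)
  then have "\<exists>h\<in>H. h \<subseteq> C \<and> i \<in> h \<and> y \<in> h" using y(1) yC by (intro bexI[of _ "{i,y}"]) auto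
  then have iy: "(i, y) \<in> comem C H" by (simp add: comem_def)
  have "(y, j) \<in> Id_on C \<union> (comem C H)\<^sup>+" using Suc.IH[OF y(3)] .
  then show ?case using iy by (auto intro: trancl_into_trancl2)
qed

lemma rgame_vG:
  assumes fin: "finite C" and EH: "\<And>h. h \<in> E \<Longrightarrow> h \<subseteq> C \<Longrightarrow> h \<in> H"
  shows "rgame \<delta> E H C = vG \<delta> E C"
proof -
  define R where "R = Id_on C \<union> (comem C H)\<^sup>+"
  have sub: "comem C H \<subseteq> C \<times> C" unfolding comem_def by auto
  have RC: "R \<subseteq> C \<times> C" unfolding R_def using trancl_subset_Sigma[OF sub] by auto
  have symc: "sym (comem C H)" unfolding comem_def sym_def by auto
  have eqv: "equiv C R"
  proof (rule equivI)
    show "R \<subseteq> C \<times> C" by (rule RC)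
    show "refl_on C R" unfolding refl_on_def R_def by auto
    show "sym R" unfolding R_def by (intro sym_Un sym_Id_on sym_trancl symc)
    show "trans R"
    proof (rule transI)
      fix x y z assume "(x, y) \<in> R" "(y, z) \<in> R"
      then show "(x, z) \<in> R" unfolding R_def by (auto intro: trancl_trans)
    qed
  qed
  have walkR: "\<And>i j n. walk_in E C i j n \<Longrightarrow> (i, j) \<in> R"
    unfolding R_def by (rule walk_in_R[OF EH])
  define h where "h i = (\<Sum>j\<in>C - {i}. dpow \<delta> E C i j)" for i
  have vB: "vG \<delta> E B = sum h B" if B: "B \<in> C // R" for B
  proof -
    have BC: "B \<subseteq> C" using in_quotient_imp_subset[OF eqv B] .
    have closed: "\<And>i j. i \<in> B \<Longrightarrow> (i, j) \<in> R \<Longrightarrow> j \<in> B"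
      using in_quotient_imp_closed[OF eqv B] by blast
    have walkB: "walk_in E C i j n \<Longrightarrow> i \<in> B \<Longrightarrow> walk_in E B i j n" for i j n
    proof (induction n arbitrary: i)
      case 0 then show ?case by (auto simp: walk_0)
    next
      case (Suc n)
      then obtain y where y: "i \<in> C" "{i,y} \<in> E" "walk_in E C y j n" by (auto simp: walk_Suc)
      have "walk_in E C i y 1" using y walk_ends[OF y(3)] by (simp add: walk_Suc walk_0)
      then have "y \<in> B" using closed[OF Suc.prems(2) walkR] by blast
      then show ?case using Suc.IH[OF y(3)] y Suc.prems(2) by (auto simp: walk_Suc)
    qed
    have same: "(\<lambda>n. walk_in E B i j n) = (\<lambda>n. walk_in E C i j n)" if "i \<in> B" for i j
      using walkB[OF _ that] walk_mono[OF _ BC] by blast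
    have dB: "dpow \<delta> E B i j = dpow \<delta> E C i j" if "i \<in> B" for i j
      unfolding dpow_def dist_in_def using same[OF that, of j] by simp
    have z: "dpow \<delta> E C i j = 0" if "i \<in> B" "j \<in> C - B" for i j
    proof -
      have "\<not> walk_in E C i j n" for n using walkR closed that by blast
      then have "\<not> (\<exists>n. walk_in E C i j n)" by blast
      then show ?thesis unfolding dpow_def by (simp only: if_False)
    qed
    have "vG \<delta> E B = (\<Sum>i\<in>B. \<Sum>j\<in>B - {i}. dpow \<delta> E C i j)"
      unfolding vG_def by (rule sum.cong[OF refl]) (rule sum.cong[OF refl], simp add: dB)
    also have "\<dots> = sum h B"
      unfolding h_def
    proof (rule sum.cong[OF refl])
      fix i assume i: "i \<in> B"
      show "(\<Sum>j\<in>B - {i}. dpow \<delta> E C i j) = (\<Sum>j\<in>C - {i}. dpow \<delta> E C i j)"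
        by (rule sum.mono_neutral_left) (use fin BC z i in auto)
    qed
    finally show ?thesis .
  qed
  have "rgame \<delta> E H C = (\<Sum>B\<in>C // R. sum h B)"
    unfolding rgame_def conf_classes_def R_def[symmetric] by (rule sum.cong[OF refl]) (rule vB)
  also have "\<dots> = sum h (\<Union>(C // R))"
  proof (rule sum.Union_disjoint[symmetric, simplified])
    show "\<forall>A\<in>C // R. finite A" using in_quotient_imp_subset[OF eqv] fin finite_subset by blast
    show "\<forall>A\<in>C // R. \<forall>B\<in>C // R. A \<noteq> B \<longrightarrow> A \<inter> B = {}" using quotient_disj[OF eqv] by blast
  qed
  also have "\<Union>(C // R) = C" by (rule Union_quotient[OF eqv])
  also have "sum h C = vG \<delta> E C" unfolding vG_def h_def ..
  finally show ?thesis .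
qed

definition ind :: "bool \<Rightarrow> real" where "ind b = (if b then 1 else 0)"

definition Gf :: "nat \<Rightarrow> real \<Rightarrow> real \<Rightarrow> real" where
  "Gf d a b = a * b + (real d + 1 - a - b) * (a + b)"

context cat
begin

lemma vG_sum:
  assumes "C \<subseteq> V"
  shows "vG \<delta> E C = (\<Sum>p\<in>V. \<Sum>q\<in>V - {p}. \<delta> ^ D p q * (if Pset p q \<subseteq> C then 1 else 0))"
proof -
  have finC: "finite C" using assms finV finite_subset by blast
  have "vG \<delta> E C = (\<Sum>p\<in>C. \<Sum>q\<in>C - {p}. \<delta> ^ D p q * (if Pset p q \<subseteq> C then 1 else 0))"
    unfolding vG_def
  proof (rule sum.cong[OF refl], rule sum.cong[OF refl])
    fix p q assume "p \<in> C" "q \<in> C - {p}"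
    moreover then have "p \<in> V" "q \<in> V" using assms by auto
    ultimately show "dpow \<delta> E C p q = \<delta> ^ D p q * (if Pset p q \<subseteq> C then 1 else 0)"
      using dpow_eq[OF assms \<open>p \<in> V\<close> \<open>q \<in> V\<close>] by simp
  qed
  also have "\<dots> = (\<Sum>p\<in>C. \<Sum>q\<in>V - {p}. \<delta> ^ D p q * (if Pset p q \<subseteq> C then 1 else 0))"
  proof (rule sum.cong[OF refl])
    fix p assume p: "p \<in> C"
    show "(\<Sum>q\<in>C - {p}. \<delta> ^ D p q * (if Pset p q \<subseteq> C then 1 else 0)) =
          (\<Sum>q\<in>V - {p}. \<delta> ^ D p q * (if Pset p q \<subseteq> C then 1 else 0))"
    proof (rule sum.mono_neutral_left)
      show "finite (V - {p})" using finV by simp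
      show "C - {p} \<subseteq> V - {p}" using assms by auto
      show "\<forall>i\<in>V - {p} - (C - {p}). \<delta> ^ D p i * (if Pset p i \<subseteq> C then 1 else 0) = 0"
        using Pset_ends p assms by auto
    qed
  qed
  also have "\<dots> = (\<Sum>p\<in>V. \<Sum>q\<in>V - {p}. \<delta> ^ D p q * (if Pset p q \<subseteq> C then 1 else 0))"
  proof (rule sum.mono_neutral_left)
    show "finite V" by (rule finV)
    show "C \<subseteq> V" by (rule assms)
    show "\<forall>i\<in>V - C. (\<Sum>q\<in>V - {i}. \<delta> ^ D i q * (if Pset i q \<subseteq> C then 1 else 0)) = 0"
    proof
      fix i assume i: "i \<in> V - C"
      show "(\<Sum>q\<in>V - {i}. \<delta> ^ D i q * (if Pset i q \<subseteq> C then 1 else 0)) = 0"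
      proof (rule sum.neutral, rule ballI)
        fix q assume "q \<in> V - {i}"
        then have "\<not> Pset i q \<subseteq> C" using Pset_ends[of i q] i by auto
        then show "\<delta> ^ D i q * (if Pset i q \<subseteq> C then 1 else 0) = 0" by simp
      qed
    qed
  qed
  finally show ?thesis .
qed

lemma shapley_game:
  assumes "X \<subseteq> V" "j \<in> X" "\<And>S. S \<subseteq> X \<Longrightarrow> u S = vG \<delta> E S"
  shows "shapley X u j = (\<Sum>p\<in>V. \<Sum>q\<in>V - {p}. \<delta> ^ D p q *
            (if Pset p q \<subseteq> X \<and> j \<in> Pset p q then 1 / real (card (Pset p q)) else 0))"
proof -
  have finX: "finite X" using assms finV finite_subset by blast
  have "shapley X u j = shapley X (\<lambda>S. \<Sum>p\<in>V. 1 * (\<Sum>q\<in>V - {p}. \<delta> ^ D p q * (if Pset p q \<subseteq> S then 1 else 0))) j"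
    by (rule shapley_cong) (use assms vG_sum in auto)
  also have "\<dots> = (\<Sum>p\<in>V. 1 * shapley X (\<lambda>S. \<Sum>q\<in>V - {p}. \<delta> ^ D p q * (if Pset p q \<subseteq> S then 1 else 0)) j)"
    by (rule shapley_lin)
  also have "\<dots> = (\<Sum>p\<in>V. \<Sum>q\<in>V - {p}. \<delta> ^ D p q * shapley X (\<lambda>S. if Pset p q \<subseteq> S then 1 else 0) j)"
    by (simp add: shapley_lin)
  also have "\<dots> = (\<Sum>p\<in>V. \<Sum>q\<in>V - {p}. \<delta> ^ D p q *
            (if Pset p q \<subseteq> X \<and> j \<in> Pset p q then 1 / real (card (Pset p q)) else 0))"
    by (simp add: shapley_unan[OF finX assms(2)])
  finally show ?thesis .
qed

lemma bpow_formula: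
  assumes "i \<in> V" "j \<in> V" "i \<noteq> j"
  shows "bpow \<delta> E V E j i = (\<Sum>p\<in>V. \<Sum>q\<in>V - {p}. \<delta> ^ D p q / (real (D p q) + 1) *
            ind (i \<in> Pset p q \<and> j \<in> Pset p q))"
proof -
  have PV: "Pset p q \<subseteq> V" for p q unfolding Pset_def by auto
  have s1: "shapley V (rgame \<delta> E E) j = (\<Sum>p\<in>V. \<Sum>q\<in>V - {p}. \<delta> ^ D p q *
            (if Pset p q \<subseteq> V \<and> j \<in> Pset p q then 1 / real (card (Pset p q)) else 0))"
    by (rule shapley_game) (use assms finV finite_subset in \<open>auto intro!: rgame_vG\<close>)
  have s2: "shapley (V - {i}) (rgame \<delta> E (restr E (V - {i}))) j = (\<Sum>p\<in>V. \<Sum>q\<in>V - {p}. \<delta> ^ D p q *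
            (if Pset p q \<subseteq> V - {i} \<and> j \<in> Pset p q then 1 / real (card (Pset p q)) else 0))"
    by (rule shapley_game) (use assms finV finite_subset in \<open>auto intro!: rgame_vG simp: restr_def\<close>)
  show ?thesis
    unfolding bpow_def s1 s2 sum_subtractf[symmetric]
  proof (rule sum.cong[OF refl], rule sum.cong[OF refl])
    fix p q assume p: "p \<in> V" and q: "q \<in> V - {p}"
    have c: "real (card (Pset p q)) = real (D p q) + 1" using card_Pset[OF p] q by simp
    have e: "Pset p q \<subseteq> V - {i} \<longleftrightarrow> i \<notin> Pset p q" using PV by auto
    show "\<delta> ^ D p q * (if Pset p q \<subseteq> V \<and> j \<in> Pset p q then 1 / real (card (Pset p q)) else 0) -
          \<delta> ^ D p q * (if Pset p q \<subseteq> V - {i} \<and> j \<in> Pset p q then 1 / real (card (Pset p q)) else 0) =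
          \<delta> ^ D p q / (real (D p q) + 1) * ind (i \<in> Pset p q \<and> j \<in> Pset p q)"
      unfolding e c ind_def using PV by auto
  qed
qed

lemma card_W_P:
  assumes "s \<in> V" "r \<in> V" "s \<noteq> r" "P \<subseteq> V"
  shows "(\<Sum>w\<in>V - {s, r}. ind (w \<in> P)) = real (card P) - ind (s \<in> P) - ind (r \<in> P)"
proof -
  have finP: "finite P" using assms finV finite_subset by blast
  have "(\<Sum>w\<in>V - {s, r}. ind (w \<in> P)) = (\<Sum>w\<in>{w \<in> V - {s, r}. w \<in> P}. 1)"
    unfolding ind_def by (rule sum.inter_filter[symmetric]) (use finV in simp)
  also have "{w \<in> V - {s, r}. w \<in> P} = P - {s, r}" using assms by auto
  also have "(\<Sum>w\<in>P - {s, r}. 1) = real (card (P - {s, r}))" by simp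
  also have "card (P - {s, r}) = card P - card (P \<inter> {s, r})" by (rule card_Diff_subset_Int) (use finP in simp)
  also have "real (card P - card (P \<inter> {s, r})) = real (card P) - real (card (P \<inter> {s, r}))"
    using finP by (simp add: card_mono of_nat_diff)
  also have "real (card (P \<inter> {s, r})) = ind (s \<in> P) + ind (r \<in> P)"
    using assms(3) unfolding ind_def by (cases "s \<in> P"; cases "r \<in> P") (auto simp: Int_insert_right)
  finally show ?thesis by simp
qed

lemma beff_formula:
  assumes "s \<in> V" "r \<in> V" "s \<noteq> r"
  shows "beff \<delta> E V E s r (V - {s, r}) = (\<Sum>p\<in>V. \<Sum>q\<in>V - {p}. \<delta> ^ D p q / (real (D p q) + 1) *
            Gf (D p q) (ind (s \<in> Pset p q)) (ind (r \<in> Pset p q))) / (real (card V) - 1)"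
proof -
  have PV: "Pset p q \<subseteq> V" for p q unfolding Pset_def by auto
  define f where "f p q = \<delta> ^ D p q / (real (D p q) + 1)" for p q
  have cW: "real (card (V - {s, r})) + 1 = real (card V) - 1"
  proof -
    have "card (V - {s, r}) = card V - 2" using assms finV by (simp add: card_Diff_subset)
    moreover have "card V \<ge> 2"
    proof -
      have "card {s, r} \<le> card V" using assms finV by (intro card_mono) auto
      then show ?thesis using assms by simp
    qed
    ultimately show ?thesis by (simp add: of_nat_diff)
  qed
  have b1: "bpow \<delta> E V E s r = (\<Sum>p\<in>V. \<Sum>q\<in>V - {p}. f p q * ind (r \<in> Pset p q \<and> s \<in> Pset p q))"
    unfolding f_def using bpow_formula assms by simp
  have b2: "(\<Sum>w\<in>V - {s, r}. bpow \<delta> E V E s w + bpow \<delta> E V E w r) =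
     (\<Sum>w\<in>V - {s, r}. \<Sum>p\<in>V. \<Sum>q\<in>V - {p}. f p q * (ind (w \<in> Pset p q \<and> s \<in> Pset p q) + ind (r \<in> Pset p q \<and> w \<in> Pset p q)))"
  proof (rule sum.cong[OF refl])
    fix w assume w: "w \<in> V - {s, r}"
    have rw: "r \<noteq> w" "w \<noteq> s" using w by auto
    show "bpow \<delta> E V E s w + bpow \<delta> E V E w r =
      (\<Sum>p\<in>V. \<Sum>q\<in>V - {p}. f p q * (ind (w \<in> Pset p q \<and> s \<in> Pset p q) + ind (r \<in> Pset p q \<and> w \<in> Pset p q)))"
      unfolding f_def using bpow_formula[of w s] bpow_formula[of r w] w assms rw
      by (simp add: sum.distrib distrib_left)
  qed
  also have "\<dots> = (\<Sum>p\<in>V. \<Sum>q\<in>V - {p}. f p q * (\<Sum>w\<in>V - {s, r}. ind (w \<in> Pset p q \<and> s \<in> Pset p q) + ind (r \<in> Pset p q \<and> w \<in> Pset p q)))"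
    by (subst sum.swap) (simp add: sum.swap[of _ "V - {s, r}"] sum_distrib_left)
  finally have b2': "(\<Sum>w\<in>V - {s, r}. bpow \<delta> E V E s w + bpow \<delta> E V E w r) = \<dots>" .
  have inner: "ind (r \<in> Pset p q \<and> s \<in> Pset p q) + (\<Sum>w\<in>V - {s, r}. ind (w \<in> Pset p q \<and> s \<in> Pset p q) + ind (r \<in> Pset p q \<and> w \<in> Pset p q))
     = Gf (D p q) (ind (s \<in> Pset p q)) (ind (r \<in> Pset p q))" if p: "p \<in> V" and q: "q \<in> V - {p}" for p q
  proof -
    let ?P = "Pset p q"
    have a1: "ind (w \<in> ?P \<and> s \<in> ?P) + ind (r \<in> ?P \<and> w \<in> ?P) = (ind (s \<in> ?P) + ind (r \<in> ?P)) * ind (w \<in> ?P)" for w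
      unfolding ind_def by auto
    have "(\<Sum>w\<in>V - {s, r}. ind (w \<in> ?P \<and> s \<in> ?P) + ind (r \<in> ?P \<and> w \<in> ?P))
        = (ind (s \<in> ?P) + ind (r \<in> ?P)) * (\<Sum>w\<in>V - {s, r}. ind (w \<in> ?P))"
      unfolding a1 by (simp add: sum_distrib_left)
    also have "\<dots> = (ind (s \<in> ?P) + ind (r \<in> ?P)) * (real (D p q) + 1 - ind (s \<in> ?P) - ind (r \<in> ?P))"
      using card_W_P[OF assms PV] card_Pset[OF p] q by simp
    finally show ?thesis unfolding Gf_def ind_def by (auto simp: algebra_simps)
  qed
  have "bpow \<delta> E V E s r + (\<Sum>w\<in>V - {s, r}. bpow \<delta> E V E s w + bpow \<delta> E V E w r)
     = (\<Sum>p\<in>V. \<Sum>q\<in>V - {p}. f p q * Gf (D p q) (ind (s \<in> Pset p q)) (ind (r \<in> Pset p q)))"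
    unfolding b1 b2' sum.distrib[symmetric] distrib_left[symmetric]
    by (rule sum.cong[OF refl], rule sum.cong[OF refl]) (simp add: inner)
  then show ?thesis unfolding beff_def cW f_def by simp
qed

end

fun pos_h :: "vtx \<Rightarrow> int" where
  "pos_h HK = 0" | "pos_h (A i) = 0" | "pos_h HL = 1" | "pos_h (B j) = 1"
fun pe_h :: "vtx \<Rightarrow> nat" where
  "pe_h HK = 0" | "pe_h (A i) = 1" | "pe_h HL = 0" | "pe_h (B j) = 1"
fun pos_l :: "vtx \<Rightarrow> int" where
  "pos_l HK = 0" | "pos_l (A i) = (if i = 1 then 1 else 0)" | "pos_l HL = 3" | "pos_l (B j) = (if j = 1 then 2 else 3)"
fun pe_l :: "vtx \<Rightarrow> nat" where
  "pe_l HK = 0" | "pe_l (A i) = (if i = 1 then 0 else 1)" | "pe_l HL = 0" | "pe_l (B j) = (if j = 1 then 0 else 1)"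

lemma mem_starsV[simp]:
  "HK \<in> starsV k l" "HL \<in> starsV k l" "A i \<in> starsV k l \<longleftrightarrow> 1 \<le> i \<and> i \<le> k" "B j \<in> starsV k l \<longleftrightarrow> 1 \<le> j \<and> j \<le> l"
  unfolding starsV_def by auto

lemma finite_starsV: "finite (starsV k l)"
  unfolding starsV_def by simp

lemma cat_h: "cat (starsV k l) (Thh k l) pos_h pe_h"
proof
  show "finite (starsV k l)" by (rule finite_starsV)
  show "pe_h x \<le> 1" for x by (cases x) auto
  show "x = y" if "x \<in> starsV k l" "y \<in> starsV k l" "pe_h x = 0" "pe_h y = 0" "pos_h x = pos_h y" for x y
    using that by (cases x; cases y) auto
  show "\<exists>w\<in>starsV k l. pe_h w = 0 \<and> pos_h w = z"
    if "x \<in> starsV k l" "y \<in> starsV k l" "pos_h x \<le> z" "z \<le> pos_h y" for x y z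
  proof -
    have "z = 0 \<or> z = 1" using that by (cases x; cases y) auto
    then show ?thesis by (auto intro: bexI[of _ HK] bexI[of _ HL])
  qed
  show "\<exists>x\<in>starsV k l. \<exists>y\<in>starsV k l. e = {x, y} \<and> cD pos_h pe_h x y = 1" if eT: "e \<in> Thh k l" for e
  proof -
    consider (a) "e = {HK, HL}" | (b) i where "i \<in> {1..k}" "e = {HK, A i}" | (c) j where "j \<in> {1..l}" "e = {HL, B j}"
      using eT unfolding Thh_def starsE_def by auto
    then show ?thesis
    proof cases
      case a then show ?thesis by (intro bexI[of _ HK] bexI[of _ HL]) (auto simp: cD_def)
    next
      case b then show ?thesis by (intro bexI[of _ HK] bexI[of _ "A i"]) (auto simp: cD_def)
    next
      case c then show ?thesis by (intro bexI[of _ HL] bexI[of _ "B j"]) (auto simp: cD_def)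
    qed
  qed
  show "{x, y} \<in> Thh k l" if "x \<in> starsV k l" "y \<in> starsV k l" "cD pos_h pe_h x y = 1" for x y
    using that unfolding Thh_def starsE_def
    by (cases x; cases y) (auto simp: cD_def insert_commute split: if_splits)
qed

lemma cat_l: assumes "k \<ge> 1" "l \<ge> 1" shows "cat (starsV k l) (Tll k l) pos_l pe_l"
proof
  show "finite (starsV k l)" by (rule finite_starsV)
  show "pe_l x \<le> 1" for x by (cases x) auto
  show "x = y" if "x \<in> starsV k l" "y \<in> starsV k l" "pe_l x = 0" "pe_l y = 0" "pos_l x = pos_l y" for x y
    using that by (cases x; cases y) (auto split: if_splits)
  show "\<exists>w\<in>starsV k l. pe_l w = 0 \<and> pos_l w = z"
    if "x \<in> starsV k l" "y \<in> starsV k l" "pos_l x \<le> z" "z \<le> pos_l y" for x y z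
  proof -
    have "0 \<le> pos_l x" by (cases x) auto
    have "pos_l y \<le> 3" by (cases y) auto
    then have "z = 0 \<or> z = 1 \<or> z = 2 \<or> z = 3" using that \<open>0 \<le> pos_l x\<close> by linarith
    moreover have "A 1 \<in> starsV k l" "B 1 \<in> starsV k l" using assms by auto
    ultimately show ?thesis by (auto intro: bexI[of _ HK] bexI[of _ HL] bexI[of _ "A 1"] bexI[of _ "B 1"])
  qed
  show "\<exists>x\<in>starsV k l. \<exists>y\<in>starsV k l. e = {x, y} \<and> cD pos_l pe_l x y = 1" if eT: "e \<in> Tll k l" for e
  proof -
    consider (a) "e = {A 1, B 1}" | (b) i where "i \<in> {1..k}" "e = {HK, A i}" | (c) j where "j \<in> {1..l}" "e = {HL, B j}"
      using eT unfolding Tll_def starsE_def by auto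
    then show ?thesis
    proof cases
      case a then show ?thesis using assms by (intro bexI[of _ "A 1"] bexI[of _ "B 1"]) (auto simp: cD_def)
    next
      case b then show ?thesis by (intro bexI[of _ HK] bexI[of _ "A i"]) (auto simp: cD_def)
    next
      case c then show ?thesis by (intro bexI[of _ HL] bexI[of _ "B j"]) (auto simp: cD_def)
    qed
  qed
  show "{x, y} \<in> Tll k l" if "x \<in> starsV k l" "y \<in> starsV k l" "cD pos_l pe_l x y = 1" for x y
    using that unfolding Tll_def starsE_def
    by (cases x; cases y) (auto simp: cD_def insert_commute split: if_splits)
qed

lemma dsum_blocks:
  fixes F :: "'a \<Rightarrow> 'a \<Rightarrow> real"
  assumes fin: "finite I" and V: "V = (\<Union>a\<in>I. blk a)" and finb: "\<forall>a\<in>I. finite (blk a)"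
    and disj: "\<forall>a\<in>I. \<forall>b\<in>I. a \<noteq> b \<longrightarrow> blk a \<inter> blk b = {}"
    and val: "\<forall>a\<in>I. \<forall>b\<in>I. \<forall>p\<in>blk a. \<forall>q\<in>blk b. p \<noteq> q \<longrightarrow> F p q = \<Phi> a b"
  shows "(\<Sum>p\<in>V. \<Sum>q\<in>V - {p}. F p q) =
    (\<Sum>a\<in>I. \<Sum>b\<in>I. (real (card (blk a)) * real (card (blk b)) - (if a = b then real (card (blk a)) else 0)) * \<Phi> a b)"
proof -
  define G where "G p q = (if q = p then 0 else F p q)" for p q
  have finV: "finite V" using V fin finb by auto
  have "(\<Sum>p\<in>V. \<Sum>q\<in>V - {p}. F p q) = (\<Sum>p\<in>V. \<Sum>q\<in>V. G p q)"
  proof (rule sum.cong[OF refl])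
    fix p assume "p \<in> V"
    show "(\<Sum>q\<in>V - {p}. F p q) = (\<Sum>q\<in>V. G p q)"
      unfolding G_def by (rule sum.mono_neutral_cong_left) (use finV in auto)
  qed
  also have "\<dots> = (\<Sum>a\<in>I. \<Sum>p\<in>blk a. \<Sum>b\<in>I. \<Sum>q\<in>blk b. G p q)"
    unfolding V using fin finb disj by (simp add: sum.UNION_disjoint)
  also have "\<dots> = (\<Sum>a\<in>I. \<Sum>b\<in>I. \<Sum>p\<in>blk a. \<Sum>q\<in>blk b. G p q)"
    by (rule sum.cong[OF refl]) (rule sum.swap)
  also have "\<dots> = (\<Sum>a\<in>I. \<Sum>b\<in>I. (real (card (blk a)) * real (card (blk b)) - (if a = b then real (card (blk a)) else 0)) * \<Phi> a b)"
  proof (rule sum.cong[OF refl], rule sum.cong[OF refl])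
    fix a b assume a: "a \<in> I" and b: "b \<in> I"
    have "(\<Sum>p\<in>blk a. \<Sum>q\<in>blk b. G p q) = (\<Sum>p\<in>blk a. \<Sum>q\<in>blk b. (if q = p then 0 else \<Phi> a b))"
      unfolding G_def using val a b by (intro sum.cong refl) auto
    also have "\<dots> = (\<Sum>p\<in>blk a. (real (card (blk b)) - (if p \<in> blk b then 1 else 0)) * \<Phi> a b)"
    proof (rule sum.cong[OF refl])
      fix p assume "p \<in> blk a"
      have "(\<Sum>q\<in>blk b. (if q = p then 0 else \<Phi> a b)) = (\<Sum>q\<in>blk b. \<Phi> a b - (if q = p then \<Phi> a b else 0))"
        by (rule sum.cong) auto
      also have "\<dots> = real (card (blk b)) * \<Phi> a b - (if p \<in> blk b then \<Phi> a b else 0)"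
        using finb b by (simp add: sum_subtractf)
      also have "\<dots> = (real (card (blk b)) - (if p \<in> blk b then 1 else 0)) * \<Phi> a b"
        by (simp add: algebra_simps)
      finally show "(\<Sum>q\<in>blk b. (if q = p then 0 else \<Phi> a b)) = (real (card (blk b)) - (if p \<in> blk b then 1 else 0)) * \<Phi> a b" .
    qed
    also have "\<dots> = (real (card (blk a)) * real (card (blk b)) - real (card (blk a \<inter> blk b))) * \<Phi> a b"
    proof -
      have "(\<Sum>p\<in>blk a. (if p \<in> blk b then 1 else 0) :: real) = real (card (blk a \<inter> blk b))"
        using finb a by (simp add: sum.If_cases Int_def)
      then show ?thesis
        using finb a by (simp add: sum_distrib_right[symmetric] sum_distrib_left[symmetric] sum_subtractf algebra_simps)
    qed
    also have "real (card (blk a \<inter> blk b)) = (if a = b then real (card (blk a)) else 0)"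
      using disj a b by auto
    finally show "(\<Sum>p\<in>blk a. \<Sum>q\<in>blk b. G p q) = (real (card (blk a)) * real (card (blk b)) - (if a = b then real (card (blk a)) else 0)) * \<Phi> a b" .
  qed
  finally show ?thesis .
qed

definition fpow :: "real \<Rightarrow> nat \<Rightarrow> real" where "fpow \<delta> n = \<delta> ^ n / (real n + 1)"

definition Fh :: "real \<Rightarrow> nat \<Rightarrow> nat \<Rightarrow> vtx \<Rightarrow> vtx \<Rightarrow> real" where
  "Fh \<delta> k l p q = \<delta> ^ cD pos_h pe_h p q / (real (cD pos_h pe_h p q) + 1) *
     Gf (cD pos_h pe_h p q) (ind (HK \<in> cat.Pset (starsV k l) pos_h pe_h p q)) (ind (HL \<in> cat.Pset (starsV k l) pos_h pe_h p q))"

definition blk_h :: "nat \<Rightarrow> nat \<Rightarrow> nat \<Rightarrow> vtx set" where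
  "blk_h k l a = (if a = 0 then {HK} else if a = 1 then {HL} else if a = 2 then A ` {1..k} else B ` {1..l})"

definition Phi_h :: "real \<Rightarrow> nat \<Rightarrow> nat \<Rightarrow> real" where
  "Phi_h \<delta> a b = [[0, fpow \<delta> 1, fpow \<delta> 1, 3 * fpow \<delta> 2],
                   [fpow \<delta> 1, 0, 3 * fpow \<delta> 2, fpow \<delta> 1],
                   [fpow \<delta> 1, 3 * fpow \<delta> 2, 2 * fpow \<delta> 2, 5 * fpow \<delta> 3],
                   [3 * fpow \<delta> 2, fpow \<delta> 1, 5 * fpow \<delta> 3, 2 * fpow \<delta> 2]] ! a ! b"

lemma memP_h: "s \<in> starsV k l \<Longrightarrow> s \<in> cat.Pset (starsV k l) pos_h pe_h p q \<longleftrightarrow>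
   cD pos_h pe_h p s + cD pos_h pe_h s q = cD pos_h pe_h p q"
  using cat.Pset_def[OF cat_h] by simp

lemma h_0_1[simp]: "Fh \<delta> k l HK HL = fpow \<delta> 1"
  using TrueI by (simp add: Fh_def memP_h cD_def Gf_def ind_def fpow_def numeral_eq_Suc)
lemma h_0_2[simp]: "Fh \<delta> k l HK (A j) = fpow \<delta> 1"
  using TrueI by (simp add: Fh_def memP_h cD_def Gf_def ind_def fpow_def numeral_eq_Suc)
lemma h_0_3[simp]: "Fh \<delta> k l HK (B j) = 3 * fpow \<delta> 2"
  using TrueI by (simp add: Fh_def memP_h cD_def Gf_def ind_def fpow_def numeral_eq_Suc)
lemma h_1_0[simp]: "Fh \<delta> k l HL HK = fpow \<delta> 1"
  using TrueI by (simp add: Fh_def memP_h cD_def Gf_def ind_def fpow_def numeral_eq_Suc)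
lemma h_1_2[simp]: "Fh \<delta> k l HL (A j) = 3 * fpow \<delta> 2"
  using TrueI by (simp add: Fh_def memP_h cD_def Gf_def ind_def fpow_def numeral_eq_Suc)
lemma h_1_3[simp]: "Fh \<delta> k l HL (B j) = fpow \<delta> 1"
  using TrueI by (simp add: Fh_def memP_h cD_def Gf_def ind_def fpow_def numeral_eq_Suc)
lemma h_2_0[simp]: "Fh \<delta> k l (A i) HK = fpow \<delta> 1"
  using TrueI by (simp add: Fh_def memP_h cD_def Gf_def ind_def fpow_def numeral_eq_Suc)
lemma h_2_1[simp]: "Fh \<delta> k l (A i) HL = 3 * fpow \<delta> 2"
  using TrueI by (simp add: Fh_def memP_h cD_def Gf_def ind_def fpow_def numeral_eq_Suc)
lemma h_2_2[simp]: "Fh \<delta> k l (A i) (A i') = (if i = i' then 0 else 2 * fpow \<delta> 2)"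
  using TrueI by (simp add: Fh_def memP_h cD_def Gf_def ind_def fpow_def numeral_eq_Suc)
lemma h_2_3[simp]: "Fh \<delta> k l (A i) (B j) = 5 * fpow \<delta> 3"
  using TrueI by (simp add: Fh_def memP_h cD_def Gf_def ind_def fpow_def numeral_eq_Suc)
lemma h_3_0[simp]: "Fh \<delta> k l (B i) HK = 3 * fpow \<delta> 2"
  using TrueI by (simp add: Fh_def memP_h cD_def Gf_def ind_def fpow_def numeral_eq_Suc)
lemma h_3_1[simp]: "Fh \<delta> k l (B i) HL = fpow \<delta> 1"
  using TrueI by (simp add: Fh_def memP_h cD_def Gf_def ind_def fpow_def numeral_eq_Suc)
lemma h_3_2[simp]: "Fh \<delta> k l (B i) (A j) = 5 * fpow \<delta> 3"
  using TrueI by (simp add: Fh_def memP_h cD_def Gf_def ind_def fpow_def numeral_eq_Suc)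
lemma h_3_3[simp]: "Fh \<delta> k l (B i) (B i') = (if i = i' then 0 else 2 * fpow \<delta> 2)"
  using TrueI by (simp add: Fh_def memP_h cD_def Gf_def ind_def fpow_def numeral_eq_Suc)

lemma val_h:
  assumes "a < 4" "b < 4" "p \<in> blk_h k l a" "q \<in> blk_h k l b" "p \<noteq> q"
  shows "Fh \<delta> k l p q = Phi_h \<delta> a b"
proof -
  have "a = 0 \<or> a = 1 \<or> a = 2 \<or> a = 3" "b = 0 \<or> b = 1 \<or> b = 2 \<or> b = 3" using assms by arith+
  then show ?thesis using assms
    by (elim disjE) (auto simp: blk_h_def Phi_h_def split: if_splits)
qed

lemma four: "{..<4::nat} = {0,1,2,3}" by auto

lemma num_h:
  "(\<Sum>p\<in>starsV k l. \<Sum>q\<in>starsV k l - {p}. Fh \<delta> k l p q) =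
     fpow \<delta> 1 * (2 + 2 * real k + 2 * real l) + fpow \<delta> 2 * (4 * real k + 4 * real l + 2 * real k ^ 2 + 2 * real l ^ 2)
     + fpow \<delta> 3 * (10 * real k * real l)"
proof -
  have "(\<Sum>p\<in>starsV k l. \<Sum>q\<in>starsV k l - {p}. Fh \<delta> k l p q) =
    (\<Sum>a\<in>{..<4}. \<Sum>b\<in>{..<4}. (real (card (blk_h k l a)) * real (card (blk_h k l b)) - (if a = b then real (card (blk_h k l a)) else 0)) * Phi_h \<delta> a b)"
  proof (rule dsum_blocks)
    show "finite {..<4::nat}" by simp
    show "starsV k l = (\<Union>a\<in>{..<4}. blk_h k l a)" unfolding four starsV_def blk_h_def by auto
    show "\<forall>a\<in>{..<4}. finite (blk_h k l a)" unfolding four blk_h_def by auto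
    show "\<forall>a\<in>{..<4}. \<forall>b\<in>{..<4}. a \<noteq> b \<longrightarrow> blk_h k l a \<inter> blk_h k l b = {}" unfolding four blk_h_def by auto
    show "\<forall>a\<in>{..<4}. \<forall>b\<in>{..<4}. \<forall>p\<in>blk_h k l a. \<forall>q\<in>blk_h k l b. p \<noteq> q \<longrightarrow> Fh \<delta> k l p q = Phi_h \<delta> a b"
      using val_h by auto
  qed
  also have "\<dots> = fpow \<delta> 1 * (2 + 2 * real k + 2 * real l) + fpow \<delta> 2 * (4 * real k + 4 * real l + 2 * real k ^ 2 + 2 * real l ^ 2)
     + fpow \<delta> 3 * (10 * real k * real l)"
    unfolding four by (simp add: blk_h_def Phi_h_def card_image inj_on_def algebra_simps power2_eq_square)
  finally show ?thesis .
qed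

definition Fl :: "real \<Rightarrow> nat \<Rightarrow> nat \<Rightarrow> vtx \<Rightarrow> vtx \<Rightarrow> real" where
  "Fl \<delta> k l p q = \<delta> ^ cD pos_l pe_l p q / (real (cD pos_l pe_l p q) + 1) *
     Gf (cD pos_l pe_l p q) (ind (A 1 \<in> cat.Pset (starsV k l) pos_l pe_l p q)) (ind (B 1 \<in> cat.Pset (starsV k l) pos_l pe_l p q))"

definition blk_l :: "nat \<Rightarrow> nat \<Rightarrow> nat \<Rightarrow> vtx set" where
  "blk_l k l a = (if a = 0 then {HK} else if a = 1 then {A 1} else if a = 2 then {B 1} else if a = 3 then {HL}
     else if a = 4 then A ` {2..k} else B ` {2..l})"

definition Phi_l :: "real \<Rightarrow> nat \<Rightarrow> nat \<Rightarrow> real" where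
  "Phi_l \<delta> a b = [[0, fpow \<delta> 1, 3 * fpow \<delta> 2, 5 * fpow \<delta> 3, 0, 7 * fpow \<delta> 4],
     [fpow \<delta> 1, 0, fpow \<delta> 1, 3 * fpow \<delta> 2, 2 * fpow \<delta> 2, 5 * fpow \<delta> 3],
     [3 * fpow \<delta> 2, fpow \<delta> 1, 0, fpow \<delta> 1, 5 * fpow \<delta> 3, 2 * fpow \<delta> 2],
     [5 * fpow \<delta> 3, 3 * fpow \<delta> 2, fpow \<delta> 1, 0, 7 * fpow \<delta> 4, 0],
     [0, 2 * fpow \<delta> 2, 5 * fpow \<delta> 3, 7 * fpow \<delta> 4, 0, 9 * fpow \<delta> 5],
     [7 * fpow \<delta> 4, 5 * fpow \<delta> 3, 2 * fpow \<delta> 2, 0, 9 * fpow \<delta> 5, 0]] ! a ! b"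

lemma memP_l: "k \<ge> 1 \<Longrightarrow> l \<ge> 1 \<Longrightarrow> s \<in> starsV k l \<Longrightarrow> s \<in> cat.Pset (starsV k l) pos_l pe_l p q \<longleftrightarrow>
   cD pos_l pe_l p s + cD pos_l pe_l s q = cD pos_l pe_l p q"
  using cat.Pset_def[OF cat_l] by simp

lemma l_0_1[simp]: assumes "k \<ge> 1" "l \<ge> 1" shows "Fl \<delta> k l HK (A 1) = fpow \<delta> 1"
  using assms by (simp add: Fl_def memP_l[OF assms(1,2)] cD_def Gf_def ind_def fpow_def numeral_eq_Suc)
lemma l_0_2[simp]: assumes "k \<ge> 1" "l \<ge> 1" shows "Fl \<delta> k l HK (B 1) = 3 * fpow \<delta> 2"
  using assms by (simp add: Fl_def memP_l[OF assms(1,2)] cD_def Gf_def ind_def fpow_def numeral_eq_Suc)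
lemma l_0_3[simp]: assumes "k \<ge> 1" "l \<ge> 1" shows "Fl \<delta> k l HK HL = 5 * fpow \<delta> 3"
  using assms by (simp add: Fl_def memP_l[OF assms(1,2)] cD_def Gf_def ind_def fpow_def numeral_eq_Suc)
lemma l_0_4[simp]: assumes "k \<ge> 1" "l \<ge> 1" "2 \<le> j" shows "Fl \<delta> k l HK (A j) = 0"
  using assms by (simp add: Fl_def memP_l[OF assms(1,2)] cD_def Gf_def ind_def fpow_def numeral_eq_Suc)
lemma l_0_5[simp]: assumes "k \<ge> 1" "l \<ge> 1" "2 \<le> j" shows "Fl \<delta> k l HK (B j) = 7 * fpow \<delta> 4"
  using assms by (simp add: Fl_def memP_l[OF assms(1,2)] cD_def Gf_def ind_def fpow_def numeral_eq_Suc)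
lemma l_1_0[simp]: assumes "k \<ge> 1" "l \<ge> 1" shows "Fl \<delta> k l (A 1) HK = fpow \<delta> 1"
  using assms by (simp add: Fl_def memP_l[OF assms(1,2)] cD_def Gf_def ind_def fpow_def numeral_eq_Suc)
lemma l_1_2[simp]: assumes "k \<ge> 1" "l \<ge> 1" shows "Fl \<delta> k l (A 1) (B 1) = fpow \<delta> 1"
  using assms by (simp add: Fl_def memP_l[OF assms(1,2)] cD_def Gf_def ind_def fpow_def numeral_eq_Suc)
lemma l_1_3[simp]: assumes "k \<ge> 1" "l \<ge> 1" shows "Fl \<delta> k l (A 1) HL = 3 * fpow \<delta> 2"
  using assms by (simp add: Fl_def memP_l[OF assms(1,2)] cD_def Gf_def ind_def fpow_def numeral_eq_Suc)
lemma l_1_4[simp]: assumes "k \<ge> 1" "l \<ge> 1" "2 \<le> i'" shows "Fl \<delta> k l (A 1) (A i') = 2 * fpow \<delta> 2"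
  using assms by (simp add: Fl_def memP_l[OF assms(1,2)] cD_def Gf_def ind_def fpow_def numeral_eq_Suc)
lemma l_1_5[simp]: assumes "k \<ge> 1" "l \<ge> 1" "2 \<le> j" shows "Fl \<delta> k l (A 1) (B j) = 5 * fpow \<delta> 3"
  using assms by (simp add: Fl_def memP_l[OF assms(1,2)] cD_def Gf_def ind_def fpow_def numeral_eq_Suc)
lemma l_2_0[simp]: assumes "k \<ge> 1" "l \<ge> 1" shows "Fl \<delta> k l (B 1) HK = 3 * fpow \<delta> 2"
  using assms by (simp add: Fl_def memP_l[OF assms(1,2)] cD_def Gf_def ind_def fpow_def numeral_eq_Suc)
lemma l_2_1[simp]: assumes "k \<ge> 1" "l \<ge> 1" shows "Fl \<delta> k l (B 1) (A 1) = fpow \<delta> 1"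
  using assms by (simp add: Fl_def memP_l[OF assms(1,2)] cD_def Gf_def ind_def fpow_def numeral_eq_Suc)
lemma l_2_3[simp]: assumes "k \<ge> 1" "l \<ge> 1" shows "Fl \<delta> k l (B 1) HL = fpow \<delta> 1"
  using assms by (simp add: Fl_def memP_l[OF assms(1,2)] cD_def Gf_def ind_def fpow_def numeral_eq_Suc)
lemma l_2_4[simp]: assumes "k \<ge> 1" "l \<ge> 1" "2 \<le> j" shows "Fl \<delta> k l (B 1) (A j) = 5 * fpow \<delta> 3"
  using assms by (simp add: Fl_def memP_l[OF assms(1,2)] cD_def Gf_def ind_def fpow_def numeral_eq_Suc)
lemma l_2_5[simp]: assumes "k \<ge> 1" "l \<ge> 1" "2 \<le> i'" shows "Fl \<delta> k l (B 1) (B i') = 2 * fpow \<delta> 2"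
  using assms by (simp add: Fl_def memP_l[OF assms(1,2)] cD_def Gf_def ind_def fpow_def numeral_eq_Suc)
lemma l_3_0[simp]: assumes "k \<ge> 1" "l \<ge> 1" shows "Fl \<delta> k l HL HK = 5 * fpow \<delta> 3"
  using assms by (simp add: Fl_def memP_l[OF assms(1,2)] cD_def Gf_def ind_def fpow_def numeral_eq_Suc)
lemma l_3_1[simp]: assumes "k \<ge> 1" "l \<ge> 1" shows "Fl \<delta> k l HL (A 1) = 3 * fpow \<delta> 2"
  using assms by (simp add: Fl_def memP_l[OF assms(1,2)] cD_def Gf_def ind_def fpow_def numeral_eq_Suc)
lemma l_3_2[simp]: assumes "k \<ge> 1" "l \<ge> 1" shows "Fl \<delta> k l HL (B 1) = fpow \<delta> 1"
  using assms by (simp add: Fl_def memP_l[OF assms(1,2)] cD_def Gf_def ind_def fpow_def numeral_eq_Suc)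
lemma l_3_4[simp]: assumes "k \<ge> 1" "l \<ge> 1" "2 \<le> j" shows "Fl \<delta> k l HL (A j) = 7 * fpow \<delta> 4"
  using assms by (simp add: Fl_def memP_l[OF assms(1,2)] cD_def Gf_def ind_def fpow_def numeral_eq_Suc)
lemma l_3_5[simp]: assumes "k \<ge> 1" "l \<ge> 1" "2 \<le> j" shows "Fl \<delta> k l HL (B j) = 0"
  using assms by (simp add: Fl_def memP_l[OF assms(1,2)] cD_def Gf_def ind_def fpow_def numeral_eq_Suc)
lemma l_4_0[simp]: assumes "k \<ge> 1" "l \<ge> 1" "2 \<le> i" shows "Fl \<delta> k l (A i) HK = 0"
  using assms by (simp add: Fl_def memP_l[OF assms(1,2)] cD_def Gf_def ind_def fpow_def numeral_eq_Suc)
lemma l_4_1[simp]: assumes "k \<ge> 1" "l \<ge> 1" "2 \<le> i" shows "Fl \<delta> k l (A i) (A 1) = 2 * fpow \<delta> 2"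
  using assms by (simp add: Fl_def memP_l[OF assms(1,2)] cD_def Gf_def ind_def fpow_def numeral_eq_Suc)
lemma l_4_2[simp]: assumes "k \<ge> 1" "l \<ge> 1" "2 \<le> i" shows "Fl \<delta> k l (A i) (B 1) = 5 * fpow \<delta> 3"
  using assms by (simp add: Fl_def memP_l[OF assms(1,2)] cD_def Gf_def ind_def fpow_def numeral_eq_Suc)
lemma l_4_3[simp]: assumes "k \<ge> 1" "l \<ge> 1" "2 \<le> i" shows "Fl \<delta> k l (A i) HL = 7 * fpow \<delta> 4"
  using assms by (simp add: Fl_def memP_l[OF assms(1,2)] cD_def Gf_def ind_def fpow_def numeral_eq_Suc)
lemma l_4_4[simp]: assumes "k \<ge> 1" "l \<ge> 1" "2 \<le> i" "2 \<le> i'" shows "Fl \<delta> k l (A i) (A i') = (if i = i' then 0 else 0)"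
  using assms by (simp add: Fl_def memP_l[OF assms(1,2)] cD_def Gf_def ind_def fpow_def numeral_eq_Suc)
lemma l_4_5[simp]: assumes "k \<ge> 1" "l \<ge> 1" "2 \<le> i" "2 \<le> j" shows "Fl \<delta> k l (A i) (B j) = 9 * fpow \<delta> 5"
  using assms by (simp add: Fl_def memP_l[OF assms(1,2)] cD_def Gf_def ind_def fpow_def numeral_eq_Suc)
lemma l_5_0[simp]: assumes "k \<ge> 1" "l \<ge> 1" "2 \<le> i" shows "Fl \<delta> k l (B i) HK = 7 * fpow \<delta> 4"
  using assms by (simp add: Fl_def memP_l[OF assms(1,2)] cD_def Gf_def ind_def fpow_def numeral_eq_Suc)
lemma l_5_1[simp]: assumes "k \<ge> 1" "l \<ge> 1" "2 \<le> i" shows "Fl \<delta> k l (B i) (A 1) = 5 * fpow \<delta> 3"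
  using assms by (simp add: Fl_def memP_l[OF assms(1,2)] cD_def Gf_def ind_def fpow_def numeral_eq_Suc)
lemma l_5_2[simp]: assumes "k \<ge> 1" "l \<ge> 1" "2 \<le> i" shows "Fl \<delta> k l (B i) (B 1) = 2 * fpow \<delta> 2"
  using assms by (simp add: Fl_def memP_l[OF assms(1,2)] cD_def Gf_def ind_def fpow_def numeral_eq_Suc)
lemma l_5_3[simp]: assumes "k \<ge> 1" "l \<ge> 1" "2 \<le> i" shows "Fl \<delta> k l (B i) HL = 0"
  using assms by (simp add: Fl_def memP_l[OF assms(1,2)] cD_def Gf_def ind_def fpow_def numeral_eq_Suc)
lemma l_5_4[simp]: assumes "k \<ge> 1" "l \<ge> 1" "2 \<le> i" "2 \<le> j" shows "Fl \<delta> k l (B i) (A j) = 9 * fpow \<delta> 5"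
  using assms by (simp add: Fl_def memP_l[OF assms(1,2)] cD_def Gf_def ind_def fpow_def numeral_eq_Suc)
lemma l_5_5[simp]: assumes "k \<ge> 1" "l \<ge> 1" "2 \<le> i" "2 \<le> i'" shows "Fl \<delta> k l (B i) (B i') = (if i = i' then 0 else 0)"
  using assms by (simp add: Fl_def memP_l[OF assms(1,2)] cD_def Gf_def ind_def fpow_def numeral_eq_Suc)
lemma l_0_1'[simp]: assumes "k \<ge> 1" "l \<ge> 1" shows "Fl \<delta> k l HK (A (Suc 0)) = fpow \<delta> 1"
  using assms by (simp add: Fl_def memP_l[OF assms(1,2)] cD_def Gf_def ind_def fpow_def numeral_eq_Suc)
lemma l_0_2'[simp]: assumes "k \<ge> 1" "l \<ge> 1" shows "Fl \<delta> k l HK (B (Suc 0)) = 3 * fpow \<delta> 2"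
  using assms by (simp add: Fl_def memP_l[OF assms(1,2)] cD_def Gf_def ind_def fpow_def numeral_eq_Suc)
lemma l_1_0'[simp]: assumes "k \<ge> 1" "l \<ge> 1" shows "Fl \<delta> k l (A (Suc 0)) HK = fpow \<delta> 1"
  using assms by (simp add: Fl_def memP_l[OF assms(1,2)] cD_def Gf_def ind_def fpow_def numeral_eq_Suc)
lemma l_1_2'[simp]: assumes "k \<ge> 1" "l \<ge> 1" shows "Fl \<delta> k l (A (Suc 0)) (B (Suc 0)) = fpow \<delta> 1"
  using assms by (simp add: Fl_def memP_l[OF assms(1,2)] cD_def Gf_def ind_def fpow_def numeral_eq_Suc)
lemma l_1_3'[simp]: assumes "k \<ge> 1" "l \<ge> 1" shows "Fl \<delta> k l (A (Suc 0)) HL = 3 * fpow \<delta> 2"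
  using assms by (simp add: Fl_def memP_l[OF assms(1,2)] cD_def Gf_def ind_def fpow_def numeral_eq_Suc)
lemma l_1_4'[simp]: assumes "k \<ge> 1" "l \<ge> 1" "2 \<le> i'" shows "Fl \<delta> k l (A (Suc 0)) (A i') = 2 * fpow \<delta> 2"
  using assms by (simp add: Fl_def memP_l[OF assms(1,2)] cD_def Gf_def ind_def fpow_def numeral_eq_Suc)
lemma l_1_5'[simp]: assumes "k \<ge> 1" "l \<ge> 1" "2 \<le> j" shows "Fl \<delta> k l (A (Suc 0)) (B j) = 5 * fpow \<delta> 3"
  using assms by (simp add: Fl_def memP_l[OF assms(1,2)] cD_def Gf_def ind_def fpow_def numeral_eq_Suc)
lemma l_2_0'[simp]: assumes "k \<ge> 1" "l \<ge> 1" shows "Fl \<delta> k l (B (Suc 0)) HK = 3 * fpow \<delta> 2"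
  using assms by (simp add: Fl_def memP_l[OF assms(1,2)] cD_def Gf_def ind_def fpow_def numeral_eq_Suc)
lemma l_2_1'[simp]: assumes "k \<ge> 1" "l \<ge> 1" shows "Fl \<delta> k l (B (Suc 0)) (A (Suc 0)) = fpow \<delta> 1"
  using assms by (simp add: Fl_def memP_l[OF assms(1,2)] cD_def Gf_def ind_def fpow_def numeral_eq_Suc)
lemma l_2_3'[simp]: assumes "k \<ge> 1" "l \<ge> 1" shows "Fl \<delta> k l (B (Suc 0)) HL = fpow \<delta> 1"
  using assms by (simp add: Fl_def memP_l[OF assms(1,2)] cD_def Gf_def ind_def fpow_def numeral_eq_Suc)
lemma l_2_4'[simp]: assumes "k \<ge> 1" "l \<ge> 1" "2 \<le> j" shows "Fl \<delta> k l (B (Suc 0)) (A j) = 5 * fpow \<delta> 3"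
  using assms by (simp add: Fl_def memP_l[OF assms(1,2)] cD_def Gf_def ind_def fpow_def numeral_eq_Suc)
lemma l_2_5'[simp]: assumes "k \<ge> 1" "l \<ge> 1" "2 \<le> i'" shows "Fl \<delta> k l (B (Suc 0)) (B i') = 2 * fpow \<delta> 2"
  using assms by (simp add: Fl_def memP_l[OF assms(1,2)] cD_def Gf_def ind_def fpow_def numeral_eq_Suc)
lemma l_3_1'[simp]: assumes "k \<ge> 1" "l \<ge> 1" shows "Fl \<delta> k l HL (A (Suc 0)) = 3 * fpow \<delta> 2"
  using assms by (simp add: Fl_def memP_l[OF assms(1,2)] cD_def Gf_def ind_def fpow_def numeral_eq_Suc)
lemma l_3_2'[simp]: assumes "k \<ge> 1" "l \<ge> 1" shows "Fl \<delta> k l HL (B (Suc 0)) = fpow \<delta> 1"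
  using assms by (simp add: Fl_def memP_l[OF assms(1,2)] cD_def Gf_def ind_def fpow_def numeral_eq_Suc)
lemma l_4_1'[simp]: assumes "k \<ge> 1" "l \<ge> 1" "2 \<le> i" shows "Fl \<delta> k l (A i) (A (Suc 0)) = 2 * fpow \<delta> 2"
  using assms by (simp add: Fl_def memP_l[OF assms(1,2)] cD_def Gf_def ind_def fpow_def numeral_eq_Suc)
lemma l_4_2'[simp]: assumes "k \<ge> 1" "l \<ge> 1" "2 \<le> i" shows "Fl \<delta> k l (A i) (B (Suc 0)) = 5 * fpow \<delta> 3"
  using assms by (simp add: Fl_def memP_l[OF assms(1,2)] cD_def Gf_def ind_def fpow_def numeral_eq_Suc)
lemma l_5_1'[simp]: assumes "k \<ge> 1" "l \<ge> 1" "2 \<le> i" shows "Fl \<delta> k l (B i) (A (Suc 0)) = 5 * fpow \<delta> 3"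
  using assms by (simp add: Fl_def memP_l[OF assms(1,2)] cD_def Gf_def ind_def fpow_def numeral_eq_Suc)
lemma l_5_2'[simp]: assumes "k \<ge> 1" "l \<ge> 1" "2 \<le> i" shows "Fl \<delta> k l (B i) (B (Suc 0)) = 2 * fpow \<delta> 2"
  using assms by (simp add: Fl_def memP_l[OF assms(1,2)] cD_def Gf_def ind_def fpow_def numeral_eq_Suc)

lemma vl_0_0: "k \<ge> 1 \<Longrightarrow> l \<ge> 1 \<Longrightarrow> p \<in> blk_l k l 0 \<Longrightarrow> q \<in> blk_l k l 0 \<Longrightarrow> p \<noteq> q \<Longrightarrow> Fl \<delta> k l p q = Phi_l \<delta> 0 0"
  by (auto simp: blk_l_def Phi_l_def split: if_splits)
lemma vl_0_1: "k \<ge> 1 \<Longrightarrow> l \<ge> 1 \<Longrightarrow> p \<in> blk_l k l 0 \<Longrightarrow> q \<in> blk_l k l 1 \<Longrightarrow> p \<noteq> q \<Longrightarrow> Fl \<delta> k l p q = Phi_l \<delta> 0 1"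
  by (auto simp: blk_l_def Phi_l_def split: if_splits)
lemma vl_0_2: "k \<ge> 1 \<Longrightarrow> l \<ge> 1 \<Longrightarrow> p \<in> blk_l k l 0 \<Longrightarrow> q \<in> blk_l k l 2 \<Longrightarrow> p \<noteq> q \<Longrightarrow> Fl \<delta> k l p q = Phi_l \<delta> 0 2"
  by (auto simp: blk_l_def Phi_l_def split: if_splits)
lemma vl_0_3: "k \<ge> 1 \<Longrightarrow> l \<ge> 1 \<Longrightarrow> p \<in> blk_l k l 0 \<Longrightarrow> q \<in> blk_l k l 3 \<Longrightarrow> p \<noteq> q \<Longrightarrow> Fl \<delta> k l p q = Phi_l \<delta> 0 3"
  by (auto simp: blk_l_def Phi_l_def split: if_splits)
lemma vl_0_4: "k \<ge> 1 \<Longrightarrow> l \<ge> 1 \<Longrightarrow> p \<in> blk_l k l 0 \<Longrightarrow> q \<in> blk_l k l 4 \<Longrightarrow> p \<noteq> q \<Longrightarrow> Fl \<delta> k l p q = Phi_l \<delta> 0 4"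
  by (auto simp: blk_l_def Phi_l_def split: if_splits)
lemma vl_0_5: "k \<ge> 1 \<Longrightarrow> l \<ge> 1 \<Longrightarrow> p \<in> blk_l k l 0 \<Longrightarrow> q \<in> blk_l k l 5 \<Longrightarrow> p \<noteq> q \<Longrightarrow> Fl \<delta> k l p q = Phi_l \<delta> 0 5"
  by (auto simp: blk_l_def Phi_l_def split: if_splits)
lemma vl_1_0: "k \<ge> 1 \<Longrightarrow> l \<ge> 1 \<Longrightarrow> p \<in> blk_l k l 1 \<Longrightarrow> q \<in> blk_l k l 0 \<Longrightarrow> p \<noteq> q \<Longrightarrow> Fl \<delta> k l p q = Phi_l \<delta> 1 0"
  by (auto simp: blk_l_def Phi_l_def split: if_splits)
lemma vl_1_1: "k \<ge> 1 \<Longrightarrow> l \<ge> 1 \<Longrightarrow> p \<in> blk_l k l 1 \<Longrightarrow> q \<in> blk_l k l 1 \<Longrightarrow> p \<noteq> q \<Longrightarrow> Fl \<delta> k l p q = Phi_l \<delta> 1 1"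
  by (auto simp: blk_l_def Phi_l_def split: if_splits)
lemma vl_1_2: "k \<ge> 1 \<Longrightarrow> l \<ge> 1 \<Longrightarrow> p \<in> blk_l k l 1 \<Longrightarrow> q \<in> blk_l k l 2 \<Longrightarrow> p \<noteq> q \<Longrightarrow> Fl \<delta> k l p q = Phi_l \<delta> 1 2"
  by (auto simp: blk_l_def Phi_l_def split: if_splits)
lemma vl_1_3: "k \<ge> 1 \<Longrightarrow> l \<ge> 1 \<Longrightarrow> p \<in> blk_l k l 1 \<Longrightarrow> q \<in> blk_l k l 3 \<Longrightarrow> p \<noteq> q \<Longrightarrow> Fl \<delta> k l p q = Phi_l \<delta> 1 3"
  by (auto simp: blk_l_def Phi_l_def split: if_splits)
lemma vl_1_4: "k \<ge> 1 \<Longrightarrow> l \<ge> 1 \<Longrightarrow> p \<in> blk_l k l 1 \<Longrightarrow> q \<in> blk_l k l 4 \<Longrightarrow> p \<noteq> q \<Longrightarrow> Fl \<delta> k l p q = Phi_l \<delta> 1 4"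
  by (auto simp: blk_l_def Phi_l_def split: if_splits)
lemma vl_1_5: "k \<ge> 1 \<Longrightarrow> l \<ge> 1 \<Longrightarrow> p \<in> blk_l k l 1 \<Longrightarrow> q \<in> blk_l k l 5 \<Longrightarrow> p \<noteq> q \<Longrightarrow> Fl \<delta> k l p q = Phi_l \<delta> 1 5"
  by (auto simp: blk_l_def Phi_l_def split: if_splits)
lemma vl_2_0: "k \<ge> 1 \<Longrightarrow> l \<ge> 1 \<Longrightarrow> p \<in> blk_l k l 2 \<Longrightarrow> q \<in> blk_l k l 0 \<Longrightarrow> p \<noteq> q \<Longrightarrow> Fl \<delta> k l p q = Phi_l \<delta> 2 0"
  by (auto simp: blk_l_def Phi_l_def split: if_splits)
lemma vl_2_1: "k \<ge> 1 \<Longrightarrow> l \<ge> 1 \<Longrightarrow> p \<in> blk_l k l 2 \<Longrightarrow> q \<in> blk_l k l 1 \<Longrightarrow> p \<noteq> q \<Longrightarrow> Fl \<delta> k l p q = Phi_l \<delta> 2 1"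
  by (auto simp: blk_l_def Phi_l_def split: if_splits)
lemma vl_2_2: "k \<ge> 1 \<Longrightarrow> l \<ge> 1 \<Longrightarrow> p \<in> blk_l k l 2 \<Longrightarrow> q \<in> blk_l k l 2 \<Longrightarrow> p \<noteq> q \<Longrightarrow> Fl \<delta> k l p q = Phi_l \<delta> 2 2"
  by (auto simp: blk_l_def Phi_l_def split: if_splits)
lemma vl_2_3: "k \<ge> 1 \<Longrightarrow> l \<ge> 1 \<Longrightarrow> p \<in> blk_l k l 2 \<Longrightarrow> q \<in> blk_l k l 3 \<Longrightarrow> p \<noteq> q \<Longrightarrow> Fl \<delta> k l p q = Phi_l \<delta> 2 3"
  by (auto simp: blk_l_def Phi_l_def split: if_splits)
lemma vl_2_4: "k \<ge> 1 \<Longrightarrow> l \<ge> 1 \<Longrightarrow> p \<in> blk_l k l 2 \<Longrightarrow> q \<in> blk_l k l 4 \<Longrightarrow> p \<noteq> q \<Longrightarrow> Fl \<delta> k l p q = Phi_l \<delta> 2 4"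
  by (auto simp: blk_l_def Phi_l_def split: if_splits)
lemma vl_2_5: "k \<ge> 1 \<Longrightarrow> l \<ge> 1 \<Longrightarrow> p \<in> blk_l k l 2 \<Longrightarrow> q \<in> blk_l k l 5 \<Longrightarrow> p \<noteq> q \<Longrightarrow> Fl \<delta> k l p q = Phi_l \<delta> 2 5"
  by (auto simp: blk_l_def Phi_l_def split: if_splits)
lemma vl_3_0: "k \<ge> 1 \<Longrightarrow> l \<ge> 1 \<Longrightarrow> p \<in> blk_l k l 3 \<Longrightarrow> q \<in> blk_l k l 0 \<Longrightarrow> p \<noteq> q \<Longrightarrow> Fl \<delta> k l p q = Phi_l \<delta> 3 0"
  by (auto simp: blk_l_def Phi_l_def split: if_splits)
lemma vl_3_1: "k \<ge> 1 \<Longrightarrow> l \<ge> 1 \<Longrightarrow> p \<in> blk_l k l 3 \<Longrightarrow> q \<in> blk_l k l 1 \<Longrightarrow> p \<noteq> q \<Longrightarrow> Fl \<delta> k l p q = Phi_l \<delta> 3 1"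
  by (auto simp: blk_l_def Phi_l_def split: if_splits)
lemma vl_3_2: "k \<ge> 1 \<Longrightarrow> l \<ge> 1 \<Longrightarrow> p \<in> blk_l k l 3 \<Longrightarrow> q \<in> blk_l k l 2 \<Longrightarrow> p \<noteq> q \<Longrightarrow> Fl \<delta> k l p q = Phi_l \<delta> 3 2"
  by (auto simp: blk_l_def Phi_l_def split: if_splits)
lemma vl_3_3: "k \<ge> 1 \<Longrightarrow> l \<ge> 1 \<Longrightarrow> p \<in> blk_l k l 3 \<Longrightarrow> q \<in> blk_l k l 3 \<Longrightarrow> p \<noteq> q \<Longrightarrow> Fl \<delta> k l p q = Phi_l \<delta> 3 3"
  by (auto simp: blk_l_def Phi_l_def split: if_splits)
lemma vl_3_4: "k \<ge> 1 \<Longrightarrow> l \<ge> 1 \<Longrightarrow> p \<in> blk_l k l 3 \<Longrightarrow> q \<in> blk_l k l 4 \<Longrightarrow> p \<noteq> q \<Longrightarrow> Fl \<delta> k l p q = Phi_l \<delta> 3 4"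
  by (auto simp: blk_l_def Phi_l_def split: if_splits)
lemma vl_3_5: "k \<ge> 1 \<Longrightarrow> l \<ge> 1 \<Longrightarrow> p \<in> blk_l k l 3 \<Longrightarrow> q \<in> blk_l k l 5 \<Longrightarrow> p \<noteq> q \<Longrightarrow> Fl \<delta> k l p q = Phi_l \<delta> 3 5"
  by (auto simp: blk_l_def Phi_l_def split: if_splits)
lemma vl_4_0: "k \<ge> 1 \<Longrightarrow> l \<ge> 1 \<Longrightarrow> p \<in> blk_l k l 4 \<Longrightarrow> q \<in> blk_l k l 0 \<Longrightarrow> p \<noteq> q \<Longrightarrow> Fl \<delta> k l p q = Phi_l \<delta> 4 0"
  by (auto simp: blk_l_def Phi_l_def split: if_splits)
lemma vl_4_1: "k \<ge> 1 \<Longrightarrow> l \<ge> 1 \<Longrightarrow> p \<in> blk_l k l 4 \<Longrightarrow> q \<in> blk_l k l 1 \<Longrightarrow> p \<noteq> q \<Longrightarrow> Fl \<delta> k l p q = Phi_l \<delta> 4 1"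
  by (auto simp: blk_l_def Phi_l_def split: if_splits)
lemma vl_4_2: "k \<ge> 1 \<Longrightarrow> l \<ge> 1 \<Longrightarrow> p \<in> blk_l k l 4 \<Longrightarrow> q \<in> blk_l k l 2 \<Longrightarrow> p \<noteq> q \<Longrightarrow> Fl \<delta> k l p q = Phi_l \<delta> 4 2"
  by (auto simp: blk_l_def Phi_l_def split: if_splits)
lemma vl_4_3: "k \<ge> 1 \<Longrightarrow> l \<ge> 1 \<Longrightarrow> p \<in> blk_l k l 4 \<Longrightarrow> q \<in> blk_l k l 3 \<Longrightarrow> p \<noteq> q \<Longrightarrow> Fl \<delta> k l p q = Phi_l \<delta> 4 3"
  by (auto simp: blk_l_def Phi_l_def split: if_splits)
lemma vl_4_4: "k \<ge> 1 \<Longrightarrow> l \<ge> 1 \<Longrightarrow> p \<in> blk_l k l 4 \<Longrightarrow> q \<in> blk_l k l 4 \<Longrightarrow> p \<noteq> q \<Longrightarrow> Fl \<delta> k l p q = Phi_l \<delta> 4 4"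
  by (auto simp: blk_l_def Phi_l_def split: if_splits)
lemma vl_4_5: "k \<ge> 1 \<Longrightarrow> l \<ge> 1 \<Longrightarrow> p \<in> blk_l k l 4 \<Longrightarrow> q \<in> blk_l k l 5 \<Longrightarrow> p \<noteq> q \<Longrightarrow> Fl \<delta> k l p q = Phi_l \<delta> 4 5"
  by (auto simp: blk_l_def Phi_l_def split: if_splits)
lemma vl_5_0: "k \<ge> 1 \<Longrightarrow> l \<ge> 1 \<Longrightarrow> p \<in> blk_l k l 5 \<Longrightarrow> q \<in> blk_l k l 0 \<Longrightarrow> p \<noteq> q \<Longrightarrow> Fl \<delta> k l p q = Phi_l \<delta> 5 0"
  by (auto simp: blk_l_def Phi_l_def split: if_splits)
lemma vl_5_1: "k \<ge> 1 \<Longrightarrow> l \<ge> 1 \<Longrightarrow> p \<in> blk_l k l 5 \<Longrightarrow> q \<in> blk_l k l 1 \<Longrightarrow> p \<noteq> q \<Longrightarrow> Fl \<delta> k l p q = Phi_l \<delta> 5 1"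
  by (auto simp: blk_l_def Phi_l_def split: if_splits)
lemma vl_5_2: "k \<ge> 1 \<Longrightarrow> l \<ge> 1 \<Longrightarrow> p \<in> blk_l k l 5 \<Longrightarrow> q \<in> blk_l k l 2 \<Longrightarrow> p \<noteq> q \<Longrightarrow> Fl \<delta> k l p q = Phi_l \<delta> 5 2"
  by (auto simp: blk_l_def Phi_l_def split: if_splits)
lemma vl_5_3: "k \<ge> 1 \<Longrightarrow> l \<ge> 1 \<Longrightarrow> p \<in> blk_l k l 5 \<Longrightarrow> q \<in> blk_l k l 3 \<Longrightarrow> p \<noteq> q \<Longrightarrow> Fl \<delta> k l p q = Phi_l \<delta> 5 3"
  by (auto simp: blk_l_def Phi_l_def split: if_splits)
lemma vl_5_4: "k \<ge> 1 \<Longrightarrow> l \<ge> 1 \<Longrightarrow> p \<in> blk_l k l 5 \<Longrightarrow> q \<in> blk_l k l 4 \<Longrightarrow> p \<noteq> q \<Longrightarrow> Fl \<delta> k l p q = Phi_l \<delta> 5 4"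
  by (auto simp: blk_l_def Phi_l_def split: if_splits)
lemma vl_5_5: "k \<ge> 1 \<Longrightarrow> l \<ge> 1 \<Longrightarrow> p \<in> blk_l k l 5 \<Longrightarrow> q \<in> blk_l k l 5 \<Longrightarrow> p \<noteq> q \<Longrightarrow> Fl \<delta> k l p q = Phi_l \<delta> 5 5"
  by (auto simp: blk_l_def Phi_l_def split: if_splits)

lemma val_l:
  assumes "k \<ge> 1" "l \<ge> 1" "a < 6" "b < 6" "p \<in> blk_l k l a" "q \<in> blk_l k l b" "p \<noteq> q"
  shows "Fl \<delta> k l p q = Phi_l \<delta> a b"
proof -
  have "a = 0 \<or> a = 1 \<or> a = 2 \<or> a = 3 \<or> a = 4 \<or> a = 5" "b = 0 \<or> b = 1 \<or> b = 2 \<or> b = 3 \<or> b = 4 \<or> b = 5" using assms by arith+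
  then show ?thesis using assms
    by (elim disjE) (simp_all add: vl_0_0 vl_0_1 vl_0_2 vl_0_3 vl_0_4 vl_0_5 vl_1_0 vl_1_1 vl_1_2 vl_1_3 vl_1_4 vl_1_5 vl_2_0 vl_2_1 vl_2_2 vl_2_3 vl_2_4 vl_2_5 vl_3_0 vl_3_1 vl_3_2 vl_3_3 vl_3_4 vl_3_5 vl_4_0 vl_4_1 vl_4_2 vl_4_3 vl_4_4 vl_4_5 vl_5_0 vl_5_1 vl_5_2 vl_5_3 vl_5_4 vl_5_5)
qed

lemma six: "{..<6::nat} = {0,1,2,3,4,5}" by auto

lemma num_l:
  assumes "k \<ge> 1" "l \<ge> 1"
  shows "(\<Sum>p\<in>starsV k l. \<Sum>q\<in>starsV k l - {p}. Fl \<delta> k l p q) =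
     fpow \<delta> 1 * 6 + fpow \<delta> 2 * (4 * real k + 4 * real l + 4) + fpow \<delta> 3 * (10 * real k + 10 * real l - 10)
     + fpow \<delta> 4 * (14 * real k + 14 * real l - 28) + fpow \<delta> 5 * (18 * (real k - 1) * (real l - 1))"
proof -
  have "(\<Sum>p\<in>starsV k l. \<Sum>q\<in>starsV k l - {p}. Fl \<delta> k l p q) =
    (\<Sum>a\<in>{..<6}. \<Sum>b\<in>{..<6}. (real (card (blk_l k l a)) * real (card (blk_l k l b)) - (if a = b then real (card (blk_l k l a)) else 0)) * Phi_l \<delta> a b)"
  proof (rule dsum_blocks)
    show "finite {..<6::nat}" by simp
    show "starsV k l = (\<Union>a\<in>{..<6}. blk_l k l a)"
    proof -
      have "{1..k} = insert 1 {2..k}" "{1..l} = insert 1 {2..l}" using assms by auto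
      then show ?thesis unfolding six starsV_def blk_l_def by auto
    qed
    show "\<forall>a\<in>{..<6}. finite (blk_l k l a)" unfolding six blk_l_def by auto
    show "\<forall>a\<in>{..<6}. \<forall>b\<in>{..<6}. a \<noteq> b \<longrightarrow> blk_l k l a \<inter> blk_l k l b = {}" unfolding six blk_l_def by auto
    show "\<forall>a\<in>{..<6}. \<forall>b\<in>{..<6}. \<forall>p\<in>blk_l k l a. \<forall>q\<in>blk_l k l b. p \<noteq> q \<longrightarrow> Fl \<delta> k l p q = Phi_l \<delta> a b"
      using val_l[OF assms] by auto
  qed
  also have "\<dots> = fpow \<delta> 1 * 6 + fpow \<delta> 2 * (4 * real k + 4 * real l + 4) + fpow \<delta> 3 * (10 * real k + 10 * real l - 10)
     + fpow \<delta> 4 * (14 * real k + 14 * real l - 28) + fpow \<delta> 5 * (18 * (real k - 1) * (real l - 1))"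
    unfolding six using assms by (simp add: blk_l_def Phi_l_def card_image inj_on_def algebra_simps power2_eq_square of_nat_diff)
  finally show ?thesis .
qed

lemma card_starsV: "card (starsV k l) = k + l + 2"
proof -
  have "starsV k l = insert HK (insert HL (A ` {1..k} \<union> B ` {1..l}))" unfolding starsV_def by auto
  moreover have "card (A ` {1..k} \<union> B ` {1..l}) = k + l"
    by (subst card_Un_disjoint) (auto simp: card_image inj_on_def)
  moreover have "HK \<notin> A ` {1..k} \<union> B ` {1..l}" "HL \<notin> A ` {1..k} \<union> B ` {1..l}" by auto
  moreover have "finite (A ` {1..k} \<union> B ` {1..l})" by simp
  ultimately show ?thesis by simp
qed

lemma b_hub_eq: "b_hub k l \<delta> = (\<Sum>p\<in>starsV k l. \<Sum>q\<in>starsV k l - {p}. Fh \<delta> k l p q) / (real k + real l + 1)"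
proof -
  have "b_hub k l \<delta> = (\<Sum>p\<in>starsV k l. \<Sum>q\<in>starsV k l - {p}. Fh \<delta> k l p q) / (real (card (starsV k l)) - 1)"
    unfolding b_hub_def Fh_def by (rule cat.beff_formula[OF cat_h]) auto
  then show ?thesis by (simp add: card_starsV)
qed

lemma b_leaf_eq: assumes "k \<ge> 1" "l \<ge> 1"
  shows "b_leaf k l \<delta> = (\<Sum>p\<in>starsV k l. \<Sum>q\<in>starsV k l - {p}. Fl \<delta> k l p q) / (real k + real l + 1)"
proof -
  have "b_leaf k l \<delta> = (\<Sum>p\<in>starsV k l. \<Sum>q\<in>starsV k l - {p}. Fl \<delta> k l p q) / (real (card (starsV k l)) - 1)"
    unfolding b_leaf_def Fl_def by (rule cat.beff_formula[OF cat_l[OF assms]]) (use assms in auto)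
  then show ?thesis by (simp add: card_starsV)
qed

definition Mx :: "real \<Rightarrow> real \<Rightarrow> real \<Rightarrow> real" where
  "Mx x y d = (x + y) * (d + 4/3 * d^2 - 14/5 * d^4) + 2/3 * (x^2 + y^2) * d^2 + x * y * (5/2 * d^3 - 3 * d^5)"

lemma Delta_eq: assumes "k \<ge> 1" "l \<ge> 1"
  shows "Delta k l \<delta> = Mx (real k - 1) (real l - 1) \<delta> / (real k + real l + 1)"
proof -
  have e: "(fpow \<delta> 1 * (2 + 2 * real k + 2 * real l) + fpow \<delta> 2 * (4 * real k + 4 * real l + 2 * real k ^ 2 + 2 * real l ^ 2)
     + fpow \<delta> 3 * (10 * real k * real l)) -
     (fpow \<delta> 1 * 6 + fpow \<delta> 2 * (4 * real k + 4 * real l + 4) + fpow \<delta> 3 * (10 * real k + 10 * real l - 10)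
     + fpow \<delta> 4 * (14 * real k + 14 * real l - 28) + fpow \<delta> 5 * (18 * (real k - 1) * (real l - 1)))
     = Mx (real k - 1) (real l - 1) \<delta>"
    unfolding Mx_def fpow_def by (simp add: field_simps power2_eq_square)
  show ?thesis
    unfolding Delta_def b_hub_eq b_leaf_eq[OF assms] num_h num_l[OF assms] diff_divide_distrib[symmetric] e ..
qed

lemma pos1:
  fixes x y d :: real
  assumes d: "0 < d" "d < 1" and xy: "x \<ge> 0" "y \<ge> 0" "x * y = 0" "x + y \<ge> 1"
  shows "Mx x y d > 0"
proof -
  define s where "s = x + y"
  have d3: "d^3 \<le> d" using d by (simp add: power_le_one power3_eq_cube mult_le_one mult_left_le)
  have h: "1 + 2 * d - 14/5 * d^3 > 0" using d3 d by linarith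
  have Q: "x^2 + y^2 = s^2" unfolding s_def using xy by (simp add: power2_eq_square algebra_simps)
  have M: "Mx x y d = d * (s * (1 + 4/3 * d - 14/5 * d^3) + 2/3 * s^2 * d)"
    unfolding Mx_def Q xy(3) s_def by (simp add: algebra_simps eval_nat_numeral)
  have s1: "s \<ge> 1" using xy s_def by simp
  have "2/3 * d * (s * (s - 1)) \<ge> 0" using s1 d by simp
  then have "s * (1 + 4/3 * d - 14/5 * d^3) + 2/3 * s^2 * d \<ge> s * (1 + 2 * d - 14/5 * d^3)"
    by (simp add: algebra_simps power2_eq_square)
  moreover have "s * (1 + 2 * d - 14/5 * d^3) > 0" using s1 h by simp
  ultimately show ?thesis unfolding M using d by simp
qed

lemma pos2:
  fixes x y d :: real
  assumes d: "0 < d" "d < 1" and xy: "x \<ge> 1" "y \<ge> 1" "x + y \<ge> 3"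
  shows "Mx x y d > 0"
proof -
  define s where "s = x + y"
  define Q where "Q = x^2 + y^2"
  define P where "P = x * y"
  define c2 where "c2 = 5/2 * d^2 - 3 * d^4"
  have d2: "d^2 \<le> d" using d by (simp add: power2_eq_square mult_left_le)
  have d42: "d^4 \<le> d^2" using d by (simp add: power_decreasing)
  have d3: "d^3 \<le> d" using d by (simp add: power_le_one power3_eq_cube mult_le_one mult_left_le)
  have c2: "c2 + d / 2 \<ge> 0" unfolding c2_def using d2 d42 by linarith
  have P0: "P \<ge> 0" unfolding P_def using xy by simp
  have PQ: "Q - 2 * P \<ge> 0" unfolding P_def Q_def
  proof -
    have "x^2 + y^2 - 2 * (x * y) = (x - y)^2" by (simp add: power2_eq_square algebra_simps)
    then show "x^2 + y^2 - 2 * (x * y) \<ge> 0" by simp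
  qed
  have Qs: "2 * Q - s^2 \<ge> 0" unfolding Q_def s_def
  proof -
    have "2 * (x^2 + y^2) - (x + y)^2 = (x - y)^2" by (simp add: power2_eq_square algebra_simps)
    then show "2 * (x^2 + y^2) - (x + y)^2 \<ge> 0" by simp
  qed
  have s3: "s \<ge> 3" using xy s_def by simp
  have M: "Mx x y d = d * (s * (1 + 4/3 * d - 14/5 * d^3) + 2/3 * Q * d + P * c2)"
    unfolding Mx_def s_def Q_def P_def c2_def by (simp add: algebra_simps eval_nat_numeral)
  have f1: "P * (c2 + d/2) \<ge> 0" using P0 c2 by simp
  have f2: "d * (Q - 2 * P) \<ge> 0" using PQ d by simp
  have f3: "d * (2 * Q - s^2) \<ge> 0" using Qs d by simp
  have f4: "d * (s * (s - 3)) \<ge> 0" using s3 d by simp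
  have f5: "s * (1 + 47/24 * d - 14/5 * d^3) > 0" using s3 d3 d by (intro mult_pos_pos) linarith+
  have "s * (1 + 4/3 * d - 14/5 * d^3) + 2/3 * Q * d + P * c2 > 0"
    using f1 f2 f3 f4 f5 by (simp add: algebra_simps power2_eq_square)
  then show ?thesis unfolding M using d by simp
qed

definition pp :: "real \<Rightarrow> real" where
  "pp d = 2 + 4 * d + 5/2 * d^2 - 28/5 * d^3 - 3 * d^4"

lemma Mx11: "Mx 1 1 d = d * pp d"
  unfolding Mx_def pp_def by (simp add: algebra_simps eval_nat_numeral)

lemma pp_small: assumes "0 < d" "d \<le> 0.6" shows "pp d > 0"
proof -
  have e: "pp d = 2 + 4*d + 5/2*(d*d) - 28/5*(d*(d*d)) - 3*(d*(d*(d*d)))"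
    by (simp add: pp_def eval_nat_numeral)
  have h1: "d \<le> 3/5" "0 \<le> d" using assms by auto
  have "d*d \<le> (3/5)*(3/5)" by (rule mult_mono) (use h1 in auto)
  then have h2': "d*d \<le> 9/25" by simp
  have "d*(d*d) \<le> (3/5)*(9/25)" by (rule mult_mono) (use h1 h2' in auto)
  then have h3: "d*(d*d) \<le> 27/125" by simp
  have "d*(d*(d*d)) \<le> (3/5)*(27/125)" by (rule mult_mono) (use h1 h3 in auto)
  then have h4: "d*(d*(d*d)) \<le> 81/625" by simp
  have h2: "d*d \<ge> 0" by simp
  show ?thesis unfolding e using h2 h3 h4 assms by linarith
qed

lemma q_lin:
  fixes u v a b c d e f g :: real
  assumes "0 \<le> a - 3/5 * u" "0 \<le> c - 3/5 * v" "0 \<le> b - 3/5 * u" "0 \<le> b - 3/5 * v"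
    "0 \<le> d - 9/25 * u" "0 \<le> e - 9/25 * v" "0 \<le> f - 9/25 * u" "0 \<le> g - 9/25 * v" "3/5 \<le> u" "3/5 \<le> v"
  shows "0 < - 4 - 5/2 * (u + v) + 28/5 * (a + b + c) + 3 * (d + e + f + g)"
proof -
  have "0 < - 4 + 47/10 * u + 47/10 * v" using assms by linarith
  moreover have "(- 4 - 5/2 * (u + v) + 28/5 * (a + b + c) + 3 * (d + e + f + g)) - (- 4 + 47/10 * u + 47/10 * v)
    = 28/5*(a - 3/5*u) + 28/5*(c - 3/5*v) + 14/5*(b - 3/5*u) + 14/5*(b - 3/5*v) + 3*(d - 9/25*u) + 3*(e - 9/25*v) + 3*(f - 9/25*u) + 3*(g - 9/25*v)"
    by (simp add: field_simps)
  moreover have "28/5*(a - 3/5*u) + 28/5*(c - 3/5*v) + 14/5*(b - 3/5*u) + 14/5*(b - 3/5*v) + 3*(d - 9/25*u) + 3*(e - 9/25*v) + 3*(f - 9/25*u) + 3*(g - 9/25*v) \<ge> 0"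
    using assms by (intro add_nonneg_nonneg mult_nonneg_nonneg) auto
  ultimately show ?thesis by linarith
qed

lemma pp_decr: assumes "0.6 \<le> u" "u < v" "v \<le> 1" shows "pp v < pp u"
proof -
  define q where "q = -4 - 5/2 * (u + v) + 28/5 * (u*u + u*v + v*v) + 3 * (u*u*u + u*u*v + u*v*v + v*v*v)"
  have e: "pp u - pp v = (v - u) * q" unfolding pp_def q_def by (simp add: field_simps eval_nat_numeral)
  have u0: "u \<ge> (3/5)" "v \<ge> (3/5)" using assms by auto
  have uu: "u*u \<ge> (9/25)" using mult_mono[OF u0(1) u0(1)] u0 by simp
  have vv: "v*v \<ge> (9/25)" using mult_mono[OF u0(2) u0(2)] u0 by simp
  have b1: "u*u - (3/5)*u \<ge> 0"
  proof - have "u * (u - (3/5)) \<ge> 0" using u0 by simp then show ?thesis by (simp add: algebra_simps) qed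
  have b2: "v*v - (3/5)*v \<ge> 0"
  proof - have "v * (v - (3/5)) \<ge> 0" using u0 by simp then show ?thesis by (simp add: algebra_simps) qed
  have b3: "u*v - (3/5)*u \<ge> 0"
  proof - have "u * (v - (3/5)) \<ge> 0" using u0 by simp then show ?thesis by (simp add: algebra_simps) qed
  have b4: "u*v - (3/5)*v \<ge> 0"
  proof - have "v * (u - (3/5)) \<ge> 0" using u0 by simp then show ?thesis by (simp add: algebra_simps) qed
  have c1: "u*u*u - (9/25)*u \<ge> 0"
  proof - have "u * (u*u - (9/25)) \<ge> 0" using u0 uu by simp then show ?thesis by (simp add: algebra_simps) qed
  have c2: "u*u*v - (9/25)*v \<ge> 0"
  proof - have "v * (u*u - (9/25)) \<ge> 0" using u0 uu by simp then show ?thesis by (simp add: algebra_simps) qed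
  have c3: "u*v*v - (9/25)*u \<ge> 0"
  proof - have "u * (v*v - (9/25)) \<ge> 0" using u0 vv by simp then show ?thesis by (simp add: algebra_simps) qed
  have c4: "v*v*v - (9/25)*v \<ge> 0"
  proof - have "v * (v*v - (9/25)) \<ge> 0" using u0 vv by simp then show ?thesis by (simp add: algebra_simps) qed
  have "q > 0" unfolding q_def by (rule q_lin[OF b1 b2 b3 b4 c1 c2 c3 c4 u0])
  then have "(v - u) * q > 0" using assms by simp
  then show ?thesis using e by linarith
qed

lemma pp_vals: "pp 0.9948 > 0" "pp 0.995 < 0"
  unfolding pp_def by (simp_all add: eval_nat_numeral)

lemma pp_root: "\<exists>c. 0.9948 < c \<and> c < 0.9950 \<and> pp c = 0 \<and> (\<forall>d\<in>{0<..<c}. pp d > 0) \<and> (\<forall>d\<in>{c<..<1}. pp d < 0)"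
proof -
  have cont: "continuous_on {0.9948..0.995} pp" unfolding pp_def by (intro continuous_intros)
  obtain c where c: "0.9948 \<le> c" "c \<le> 0.995" "pp c = 0"
    using IVT2'[of pp "0.995" 0 "0.9948", OF _ _ _ cont] pp_vals by force
  have c1: "c \<noteq> 0.9948"
  proof assume "c = 0.9948" then show False using c(3) pp_vals(1) by (metis less_irrefl) qed
  have c2: "c \<noteq> 0.995"
  proof assume "c = 0.995" then show False using c(3) pp_vals(2) by (metis less_irrefl) qed
  have pos: "pp d > 0" if "d \<in> {0<..<c}" for d
  proof (cases "d \<le> 0.6")
    case True then show ?thesis using pp_small that by auto
  next
    case False then show ?thesis using pp_decr[of d c] that c by auto
  qed
  have neg: "pp d < 0" if "d \<in> {c<..<1}" for d
    using pp_decr[of c d] that c by auto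
  show ?thesis using c c1 c2 pos neg by (intro exI[of _ c]) auto
qed

lemma beta_anti: assumes "1 \<le> m" "m \<le> n" shows "beta n \<le> beta m"
  unfolding beta_def using assms
  by (intro divide_left_mono mult_mono mult_pos_pos) auto

lemma weakly_more: assumes "b_leaf k l \<delta> \<le> b_hub k l \<delta>" shows "leaf_weakly_more k l \<delta>"
  unfolding leaf_weakly_more_def
proof (intro allI impI)
  fix Nh Nl assume a: "pt_count (b_hub k l \<delta>) Nh \<and> pt_count (b_leaf k l \<delta>) Nl"
  show "Nh \<le> Nl"
  proof (rule ccontr)
    assume "\<not> Nh \<le> Nl"
    then have lt: "Nl < Nh" by simp
    have Nl1: "1 \<le> Nl" using a unfolding pt_count_def by simp
    then have "Nh \<noteq> 1" using lt by simp
    then have "b_hub k l \<delta> < beta (Nh - 1)" using a unfolding pt_count_def by simp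
    moreover have "beta (Nh - 1) \<le> beta Nl" using beta_anti[OF Nl1] lt by simp
    moreover have "beta Nl \<le> b_leaf k l \<delta>" using a unfolding pt_count_def by simp
    ultimately show False using assms by linarith
  qed
qed

lemma Delta_weakly: "Delta k l \<delta> \<ge> 0 \<Longrightarrow> leaf_weakly_more k l \<delta>"
  by (rule weakly_more) (simp add: Delta_def)

theorem proposition6:
  fixes k l :: nat
  assumes "k \<ge> 1" and "l \<ge> 1"
  shows "((k, l) = (1, 1) \<longrightarrow>
            (\<forall>\<delta>\<in>{0<..<1}. Delta k l \<delta> = 0 \<and> leaf_weakly_more k l \<delta>))
       \<and> ((k, l) \<notin> {(1, 1), (2, 2)} \<longrightarrow>
            (\<forall>\<delta>\<in>{0<..<1}. Delta k l \<delta> > 0 \<and> leaf_weakly_more k l \<delta>))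
       \<and> ((k, l) = (2, 2) \<longrightarrow>
            (\<exists>\<delta>c. 0.9948 < \<delta>c \<and> \<delta>c < 0.9950 \<and> Delta k l \<delta>c = 0
               \<and> (\<forall>\<delta>\<in>{0<..<\<delta>c}. Delta k l \<delta> > 0)
               \<and> (\<forall>\<delta>\<in>{\<delta>c<..<1}. Delta k l \<delta> < 0)
               \<and> (\<forall>\<delta>\<in>{0<..\<delta>c}. leaf_weakly_more k l \<delta>)))"
proof (intro conjI impI)
  assume kl: "(k, l) = (1, 1)"
  then have k1: "k = 1" "l = 1" by auto
  have "Delta k l \<delta> = 0" for \<delta> using Delta_eq[OF assms, of \<delta>] k1 by (simp add: Mx_def)
  then show "\<forall>\<delta>\<in>{0<..<1}. Delta k l \<delta> = 0 \<and> leaf_weakly_more k l \<delta>"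
    using Delta_weakly by simp
next
  assume kl: "(k, l) \<notin> {(1, 1), (2, 2)}"
  have pos: "Delta k l \<delta> > 0" if d: "\<delta> \<in> {0<..<1}" for \<delta>
  proof -
    have d': "0 < \<delta>" "\<delta> < 1" using d by auto
    have "Mx (real k - 1) (real l - 1) \<delta> > 0"
    proof (cases "k = 1 \<or> l = 1")
      case True
      show ?thesis
      proof (rule pos1[OF d'])
        show "real k - 1 \<ge> 0" "real l - 1 \<ge> 0" using assms by auto
        show "(real k - 1) * (real l - 1) = 0" using True by auto
        show "real k - 1 + (real l - 1) \<ge> 1" using True kl assms by auto
      qed
    next
      case False
      show ?thesis
      proof (rule pos2[OF d'])
        show "real k - 1 \<ge> 1" "real l - 1 \<ge> 1" using False assms by auto
        have "k + l \<ge> 5" using False kl assms by auto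
        then show "real k - 1 + (real l - 1) \<ge> 3" by linarith
      qed
    qed
    moreover have "real k + real l + 1 > 0" by simp
    ultimately show ?thesis unfolding Delta_eq[OF assms] by simp
  qed
  then show "\<forall>\<delta>\<in>{0<..<1}. Delta k l \<delta> > 0 \<and> leaf_weakly_more k l \<delta>"
    using Delta_weakly by (simp add: less_imp_le)
next
  assume kl: "(k, l) = (2, 2)"
  then have k2: "k = 2" "l = 2" by auto
  have D: "Delta k l \<delta> = \<delta> * pp \<delta> / 5" for \<delta>
    using Delta_eq[OF assms, of \<delta>] k2 Mx11[of \<delta>] by simp
  obtain c where c: "0.9948 < c" "c < 0.9950" "pp c = 0" "\<forall>d\<in>{0<..<c}. pp d > 0" "\<forall>d\<in>{c<..<1}. pp d < 0"
    using pp_root by blast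
  show "\<exists>\<delta>c. 0.9948 < \<delta>c \<and> \<delta>c < 0.9950 \<and> Delta k l \<delta>c = 0
               \<and> (\<forall>\<delta>\<in>{0<..<\<delta>c}. Delta k l \<delta> > 0)
               \<and> (\<forall>\<delta>\<in>{\<delta>c<..<1}. Delta k l \<delta> < 0)
               \<and> (\<forall>\<delta>\<in>{0<..\<delta>c}. leaf_weakly_more k l \<delta>)"
  proof (intro exI[of _ c] conjI ballI)
    show "0.9948 < c" "c < 0.9950" using c by auto
    show "Delta k l c = 0" unfolding D using c by simp
  next
    fix \<delta> assume "\<delta> \<in> {0<..<c}"
    then show "Delta k l \<delta> > 0" unfolding D using c by simp
  next
    fix \<delta> assume d: "\<delta> \<in> {c<..<1}"
    then have "\<delta> > 0" using c by auto
    then show "Delta k l \<delta> < 0" unfolding D using c d by (simp add: mult_pos_neg)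
  next
    fix \<delta> assume d: "\<delta> \<in> {0<..c}"
    have "Delta k l \<delta> \<ge> 0"
    proof (cases "\<delta> = c")
      case True then show ?thesis unfolding D using c by simp
    next
      case False
      then have "\<delta> \<in> {0<..<c}" using d by auto
      then have "pp \<delta> > 0" "\<delta> > 0" using c(4) by auto
      then show ?thesis unfolding D by simp
    qed
    then show "leaf_weakly_more k l \<delta>" by (rule Delta_weakly)
  qed
qed

end
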